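(* Let $V$ be a finite-dimensional real vector space and $2\le p\le\dim V$. The following assignment is a one-to-one correspondence between linear Dirac structures $(P,\Omega)$ of order $p$ on $V$ relative to $\mathbb R$ and pairs $(S,\Pi)$ consisting of a subspace $S\subset V^*$ and a $p$-vector $\Pi\in\Lambda^pS^*$ satisfying condition (H'): to $(P,\Omega)$ associate $L^\perp=\{(Z,\eta)\in\Lambda^{p-1}V\times V^*: Z\in\Lambda^{p-1}P,\ i_Z\Omega=\eta|_P\}$, $S=\{\eta\in V^*:\exists Z,\ (Z,\eta)\in L^\perp\}$, and $\Pi\in\Lambda^pS^*$ (with $S^*$ identified with $V/\mathrm{Ann}(S)$) defined by $\Pi(\eta)=Z|_{\Lambda^{p-1}S}$ for $(Z,\eta)\in L^\perp$ (this is well defined and skew-symmetric).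
   Context: A linear Dirac structure of order $p$ on $V$ relative to $\mathbb R$ is a pair $(P,\Omega)$ where $P\subset V$ is a subspace and $\Omega\in\Lambda^pP^*$, satisfying condition (H): for all $Z_1,\dots,Z_{p-1}\in\Lambda^{p-1}P$ there exists $v\in P$ with $(i_{Z_1}\Omega)\wedge\dots\wedge(i_{Z_{p-1}}\Omega)=i_v\Omega$, where $(i_v\Omega)(Z)=\Omega(v\wedge Z)$ and $(i_Z\Omega)(w)=\Omega(Z\wedge w)$. For $\Pi\in\Lambda^pS^*$ and $\omega\in\Lambda^kS$, $\Pi(\omega)\in\Lambda^{p-k}S^*$ denotes the contraction $\langle\Pi(\omega),\xi\rangle=\Pi(\omega\wedge\xi)$. Condition (H'): for all $\omega_1,\dots,\omega_{p-1}\in\Lambda^{p-1}S$ there exists $\eta\in S$ with $\Pi(\omega_1)\wedge\dots\wedge\Pi(\omega_{p-1})=\Pi(\eta)$. *)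

theory Defs
  imports "HOL-Analysis.Analysis" "HOL-Combinatorics.Permutations"
begin

text \<open>
Conventions. A finite-dimensional real vector space V is a type 'v of class euclidean_space
(the inner product is never used); V^* is the set of linear maps 'v => real.
Since functions 'v => real carry no real_vector instance, the generic notions below take the
vector operations (addition ad, scalar multiplication sc) of the ambient space as parameters.

Alternating k-forms on a subspace U (i.e. elements of Lambda^k U^*) are represented by
functions f :: (nat => 'a) => real in canonical form: f only depends on the arguments
x 0, ..., x (k-1), vanishes unless all of them lie in U, and is multilinear and alternating
on U^k.  k-vectors on U (elements of Lambda^k U, which in finite dimension is the dual of
Lambda^k U^*) are represented as linear functionals on the space of alternating k-forms on U;
the pairing with decomposables is  <xi_1 ^ ... ^ xi_k, f> = f(xi_1,...,xi_k).
\<close>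

definition altform ::
  "('a \<Rightarrow> 'a \<Rightarrow> 'a) \<Rightarrow> (real \<Rightarrow> 'a \<Rightarrow> 'a) \<Rightarrow> 'a set \<Rightarrow> nat \<Rightarrow> ((nat \<Rightarrow> 'a) \<Rightarrow> real) \<Rightarrow> bool"
  where "altform ad sc U k f \<longleftrightarrow>
     (\<forall>x y. (\<forall>i<k. x i = y i) \<longrightarrow> f x = f y) \<and>
     (\<forall>x. \<not> (\<forall>i<k. x i \<in> U) \<longrightarrow> f x = 0) \<and>
     (\<forall>x i a b c. (\<forall>j<k. x j \<in> U) \<and> i < k \<and> a \<in> U \<and> b \<in> U \<longrightarrow>
         f (x(i := ad (sc c a) b)) = c * f (x(i := a)) + f (x(i := b))) \<and>
     (\<forall>x i j. (\<forall>l<k. x l \<in> U) \<and> i < k \<and> j < k \<and> i \<noteq> j \<and> x i = x j \<longrightarrow> f x = 0)"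

definition Forms ::
  "('a \<Rightarrow> 'a \<Rightarrow> 'a) \<Rightarrow> (real \<Rightarrow> 'a \<Rightarrow> 'a) \<Rightarrow> 'a set \<Rightarrow> nat \<Rightarrow> ((nat \<Rightarrow> 'a) \<Rightarrow> real) set"
  where "Forms ad sc U k = {f. altform ad sc U k f}"

text \<open>k-vectors on U: linear functionals on the space of alternating k-forms on U.\<close>
definition Kvecs ::
  "('a \<Rightarrow> 'a \<Rightarrow> 'a) \<Rightarrow> (real \<Rightarrow> 'a \<Rightarrow> 'a) \<Rightarrow> 'a set \<Rightarrow> nat \<Rightarrow> (((nat \<Rightarrow> 'a) \<Rightarrow> real) \<Rightarrow> real) set"
  where "Kvecs ad sc U k = {Z. \<forall>f\<in>Forms ad sc U k. \<forall>g\<in>Forms ad sc U k. \<forall>c.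
            Z (\<lambda>x. c * f x + g x) = c * Z f + Z g}"

text \<open>Contraction of a (k+1)-form Om with a k-vector Z: the covector w |-> Om(Z ^ w),
  represented as a 1-form (only the argument slot 0 matters).\<close>
definition contr_kvec ::
  "nat \<Rightarrow> ((nat \<Rightarrow> 'a) \<Rightarrow> real) \<Rightarrow> (((nat \<Rightarrow> 'a) \<Rightarrow> real) \<Rightarrow> real) \<Rightarrow> ((nat \<Rightarrow> 'a) \<Rightarrow> real)"
  where "contr_kvec k Om Z = (\<lambda>y. Z (\<lambda>x. Om (x(k := y 0))))"

text \<open>Contraction of a (k+1)-form with a vector v: the k-form Z |-> Om(v ^ Z).\<close>
definition contr_vec :: "((nat \<Rightarrow> 'a) \<Rightarrow> real) \<Rightarrow> 'a \<Rightarrow> ((nat \<Rightarrow> 'a) \<Rightarrow> real)"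
  where "contr_vec Om v = (\<lambda>x. Om (\<lambda>i. if i = 0 then v else x (i - 1)))"

text \<open>Wedge product of k covectors (given as 1-forms):
  (F_0 ^ ... ^ F_(k-1))(x_0,...,x_(k-1)) = det (F_i(x_j)).\<close>
definition wedge_cov :: "nat \<Rightarrow> (nat \<Rightarrow> ((nat \<Rightarrow> 'a) \<Rightarrow> real)) \<Rightarrow> ((nat \<Rightarrow> 'a) \<Rightarrow> real)"
  where "wedge_cov k F = (\<lambda>x. \<Sum>\<sigma>\<in>{\<sigma>. \<sigma> permutes {..<k}}.
            of_int (sign \<sigma>) * (\<Prod>i<k. F i (\<lambda>_. x (\<sigma> i))))"

text \<open>Operations of V and of V^*.\<close>
abbreviation vadd :: "'v::real_vector \<Rightarrow> 'v \<Rightarrow> 'v" where "vadd \<equiv> (+)"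
abbreviation vsc :: "real \<Rightarrow> 'v::real_vector \<Rightarrow> 'v" where "vsc \<equiv> (*\<^sub>R)"
definition cadd :: "('v \<Rightarrow> real) \<Rightarrow> ('v \<Rightarrow> real) \<Rightarrow> ('v \<Rightarrow> real)"
  where "cadd f g = (\<lambda>v. f v + g v)"
definition csc :: "real \<Rightarrow> ('v \<Rightarrow> real) \<Rightarrow> ('v \<Rightarrow> real)"
  where "csc c f = (\<lambda>v. c * f v)"

text \<open>Subspaces of V^*.\<close>
definition dual_subspace :: "('v::real_vector \<Rightarrow> real) set \<Rightarrow> bool"
  where "dual_subspace S \<longleftrightarrow> S \<subseteq> {f. linear f} \<and> (\<lambda>_. 0) \<in> S \<and>
      (\<forall>f\<in>S. \<forall>g\<in>S. \<forall>c. cadd (csc c f) g \<in> S)"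

text \<open>Linear Dirac structure of order p on V relative to R: condition (H).\<close>
definition linear_dirac :: "nat \<Rightarrow> 'v::real_vector set \<Rightarrow> ((nat \<Rightarrow> 'v) \<Rightarrow> real) \<Rightarrow> bool"
  where "linear_dirac p P Om \<longleftrightarrow> subspace P \<and> Om \<in> Forms vadd vsc P p \<and>
     (\<forall>Z. (\<forall>i<p-1. Z i \<in> Kvecs vadd vsc P (p-1)) \<longrightarrow>
        (\<exists>v\<in>P. wedge_cov (p-1) (\<lambda>i. contr_kvec (p-1) Om (Z i)) = contr_vec Om v))"

text \<open>Pairs (S, Pv) with S a subspace of V^*, Pv in Lambda^p S^*, satisfying (H').\<close>
definition condH' :: "nat \<Rightarrow> ('v::real_vector \<Rightarrow> real) set \<Rightarrow> ((nat \<Rightarrow> ('v \<Rightarrow> real)) \<Rightarrow> real) \<Rightarrow> bool"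
  where "condH' p S Pv \<longleftrightarrow> dual_subspace S \<and> Pv \<in> Forms cadd csc S p \<and>
     (\<forall>w. (\<forall>i<p-1. w i \<in> Kvecs cadd csc S (p-1)) \<longrightarrow>
        (\<exists>\<eta>\<in>S. wedge_cov (p-1) (\<lambda>i. contr_kvec (p-1) Pv (w i)) = contr_vec Pv \<eta>))"

text \<open>L^perp = {(Z, eta) : Z in Lambda^(p-1) P, eta in V^*, i_Z Om = eta restricted to P}.
  Here Z in Lambda^(p-1) P is represented intrinsically on P (Lambda^(p-1) P is a subspace of
  Lambda^(p-1) V via the injective canonical map).\<close>
definition Lperp :: "nat \<Rightarrow> 'v::real_vector set \<Rightarrow> ((nat \<Rightarrow> 'v) \<Rightarrow> real)
     \<Rightarrow> ((((nat \<Rightarrow> 'v) \<Rightarrow> real) \<Rightarrow> real) \<times> ('v \<Rightarrow> real)) set"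
  where "Lperp p P Om = {(Z, \<eta>). Z \<in> Kvecs vadd vsc P (p-1) \<and> linear \<eta> \<and>
            (\<forall>w\<in>P. contr_kvec (p-1) Om Z (\<lambda>_. w) = \<eta> w)}"

definition S_of :: "nat \<Rightarrow> 'v::real_vector set \<Rightarrow> ((nat \<Rightarrow> 'v) \<Rightarrow> real) \<Rightarrow> ('v \<Rightarrow> real) set"
  where "S_of p P Om = {\<eta>. \<exists>Z. (Z, \<eta>) \<in> Lperp p P Om}"

text \<open>Restriction of a (p-1)-vector Z on P to Lambda^(p-1) S, as a (p-1)-form on S:
  (xi_0,...,xi_(p-2)) |-> <Z, xi_0 ^ ... ^ xi_(p-2)>, where the wedge of the covectors
  xi_i is the (p-1)-form det(xi_i(u_j)) restricted to P.\<close>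
definition restrict_kvec :: "nat \<Rightarrow> 'v::real_vector set \<Rightarrow> ('v \<Rightarrow> real) set
     \<Rightarrow> (((nat \<Rightarrow> 'v) \<Rightarrow> real) \<Rightarrow> real) \<Rightarrow> ((nat \<Rightarrow> ('v \<Rightarrow> real)) \<Rightarrow> real)"
  where "restrict_kvec k P S Z = (\<lambda>\<xi>. if (\<forall>i<k. \<xi> i \<in> S)
      then Z (\<lambda>u. if (\<forall>j<k. u j \<in> P) then wedge_cov k (\<lambda>i y. \<xi> i (y 0)) u else 0)
      else 0)"

text \<open>Pv is the p-form on S determined by Pv(eta) = Z restricted to Lambda^(p-1) S
  for all (Z, eta) in L^perp.\<close>
definition is_Pi_of :: "nat \<Rightarrow> 'v::real_vector set \<Rightarrow> ((nat \<Rightarrow> 'v) \<Rightarrow> real)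
     \<Rightarrow> ((nat \<Rightarrow> ('v \<Rightarrow> real)) \<Rightarrow> real) \<Rightarrow> bool"
  where "is_Pi_of p P Om Pv \<longleftrightarrow> Pv \<in> Forms cadd csc (S_of p P Om) p \<and>
     (\<forall>(Z, \<eta>) \<in> Lperp p P Om. contr_vec Pv \<eta> = restrict_kvec (p-1) P (S_of p P Om) Z)"

definition dirac_to_pair :: "nat \<Rightarrow> 'v::real_vector set \<times> ((nat \<Rightarrow> 'v) \<Rightarrow> real)
     \<Rightarrow> ('v \<Rightarrow> real) set \<times> ((nat \<Rightarrow> ('v \<Rightarrow> real)) \<Rightarrow> real)"
  where "dirac_to_pair p = (\<lambda>(P, Om). (S_of p P Om, THE Pv. is_Pi_of p P Om Pv))"

end

theory Submission
  imports Defs "Jordan_Normal_Form.Determinant"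
begin

(* ---- part A ---- *)
declare fun_upd_def [simp del]
no_notation scalar_prod (infix "\<bullet>" 70)

abbreviation inU :: "'a set \<Rightarrow> nat \<Rightarrow> (nat \<Rightarrow> 'a) \<Rightarrow> bool" where
  "inU U k x \<equiv> (\<forall>i<k. x i \<in> U)"

context
  fixes U :: "'a::real_vector set" and k :: nat and f :: "(nat \<Rightarrow> 'a) \<Rightarrow> real"
  assumes f: "f \<in> Forms (+) (*\<^sub>R) U k" and U: "subspace U"
begin

lemma form_cong: "(\<And>i. i < k \<Longrightarrow> x i = y i) \<Longrightarrow> f x = f y"
  using f unfolding Forms_def altform_def by blast

lemma form_out: "\<not> inU U k x \<Longrightarrow> f x = 0"
  using f unfolding Forms_def altform_def by blast

lemma form_lin: "inU U k x \<Longrightarrow> i < k \<Longrightarrow> a \<in> U \<Longrightarrow> b \<in> U \<Longrightarrow>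
   f (x(i := c *\<^sub>R a + b)) = c * f (x(i := a)) + f (x(i := b))"
  using f unfolding Forms_def altform_def by blast

lemma form_alt: "inU U k x \<Longrightarrow> i < k \<Longrightarrow> j < k \<Longrightarrow> i \<noteq> j \<Longrightarrow> x i = x j \<Longrightarrow> f x = 0"
  using f unfolding Forms_def altform_def by blast

lemma form_zero_slot: "inU U k x \<Longrightarrow> i < k \<Longrightarrow> f (x(i := 0)) = 0"
  using form_lin[of x i 0 0 1] U by (simp add: subspace_0)

lemma form_add: "inU U k x \<Longrightarrow> i < k \<Longrightarrow> a \<in> U \<Longrightarrow> b \<in> U \<Longrightarrow>
   f (x(i := a + b)) = f (x(i := a)) + f (x(i := b))"
  using form_lin[of x i a b 1] by simp

lemma form_scale: "inU U k x \<Longrightarrow> i < k \<Longrightarrow> a \<in> U \<Longrightarrow>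
   f (x(i := c *\<^sub>R a)) = c * f (x(i := a))"
proof -
  assume h: "inU U k x" "i < k" "a \<in> U"
  have "f (x(i := c *\<^sub>R a + 0)) = c * f (x(i := a)) + f (x(i := 0))"
    using h U by (intro form_lin) (auto simp: subspace_0)
  then show ?thesis using form_zero_slot[OF h(1,2)] by simp
qed

lemma form_diff: "inU U k x \<Longrightarrow> i < k \<Longrightarrow> a \<in> U \<Longrightarrow> b \<in> U \<Longrightarrow>
   f (x(i := a - b)) = f (x(i := a)) - f (x(i := b))"
  using form_lin[of x i b a "-1"] U by (simp add: subspace_neg)

lemma form_sum: "finite J \<Longrightarrow> inU U k x \<Longrightarrow> i < k \<Longrightarrow> (\<And>j. j \<in> J \<Longrightarrow> a j \<in> U) \<Longrightarrow>
   f (x(i := (\<Sum>j\<in>J. c j *\<^sub>R a j))) = (\<Sum>j\<in>J. c j * f (x(i := a j)))"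
proof (induction J rule: finite_induct)
  case empty
  then show ?case using form_zero_slot[of x i] by (simp only: sum.empty)
next
  case (insert j J)
  have s: "(\<Sum>j\<in>J. c j *\<^sub>R a j) \<in> U"
    using insert U by (intro subspace_sum) (auto intro: subspace_scale)
  have "f (x(i := (\<Sum>j\<in>insert j J. c j *\<^sub>R a j))) = f (x(i := c j *\<^sub>R a j + (\<Sum>j\<in>J. c j *\<^sub>R a j)))"
    by (simp only: sum.insert[OF insert(1,2)])
  also have "\<dots> = c j * f (x(i := a j)) + f (x(i := (\<Sum>j\<in>J. c j *\<^sub>R a j)))"
    using insert s by (intro form_lin) auto
  finally show ?case using insert.IH insert.prems insert.hyps by (simp only: sum.insert[OF insert(1,2)]) (auto simp: fun_upd_def)
qed

lemma form_swap:
  assumes x: "inU U k x" and ab: "a < k" "b < k" "a \<noteq> b"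
  shows "f (x \<circ> Transposition.transpose a b) = - f x"
proof -
  let ?s = "x a + x b"
  have xa: "x a \<in> U" and xb: "x b \<in> U" using x ab by auto
  have s: "?s \<in> U" using xa xb U by (simp add: subspace_add)
  have xbs: "inU U k (x(b := ?s))" using x s by auto
  have 0: "f ((x(b := ?s))(a := ?s)) = 0"
    using ab xbs s by (intro form_alt[of _ a b]) auto
  have e1: "f ((x(b := ?s))(a := ?s)) = f ((x(b := ?s))(a := x a)) + f ((x(b := ?s))(a := x b))"
    using form_add[OF xbs ab(1) xa xb] .
  have xa': "inU U k (x(a := x a))" "inU U k (x(a := x b))" using x xa xb by auto
  have "(x(b := ?s))(a := x a) = (x(a := x a))(b := ?s)" using ab by (auto simp: fun_eq_iff)
  then have e2: "f ((x(b := ?s))(a := x a)) = f ((x(a := x a))(b := x a)) + f ((x(a := x a))(b := x b))"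
    using form_add[OF xa'(1) ab(2) xa xb] by simp
  have eq3: "(x(b := ?s))(a := x b) = (x(a := x b))(b := ?s)" using ab by (auto simp: fun_eq_iff)
  have e3: "f ((x(b := ?s))(a := x b)) = f ((x(a := x b))(b := x a)) + f ((x(a := x b))(b := x b))"
    unfolding eq3 by (rule form_add[OF xa'(2) ab(2) xa xb])
  have z1: "f ((x(a := x a))(b := x a)) = 0"
    using ab x xa by (intro form_alt[of _ a b]) auto
  have z2: "f ((x(a := x b))(b := x b)) = 0"
    using ab x xb by (intro form_alt[of _ a b]) auto
  have i1: "(x(a := x a))(b := x b) = x" by auto
  have i2: "(x(a := x b))(b := x a) = x \<circ> Transposition.transpose a b"
    using ab by (auto simp: fun_eq_iff Transposition.transpose_def)
  show ?thesis using 0 e1 e2 e3 z1 z2 i1 i2 by simp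
qed

lemma form_perm:
  assumes s: "\<sigma> permutes {..<k}" and x: "inU U k x"
  shows "f (x \<circ> \<sigma>) = of_int (sign \<sigma>) * f x"
proof -
  have "\<forall>x. inU U k x \<longrightarrow> f (x \<circ> \<sigma>) = of_int (sign \<sigma>) * f x"
  using s finite_lessThan
proof (induction \<sigma> rule: permutes_induct)
  case id
  then show ?case by (simp add: sign_id)
next
  case (swap a b p)
  show ?case proof (intro allI impI)
  fix x assume x: "inU U k x"
  have xt: "inU U k (x \<circ> Transposition.transpose a b)"
    using swap x by (auto simp: Transposition.transpose_def)
  have "f (x \<circ> (Transposition.transpose a b \<circ> p)) = f ((x \<circ> Transposition.transpose a b) \<circ> p)"
    by (simp add: comp_assoc)
  also have "\<dots> = of_int (sign p) * f (x \<circ> Transposition.transpose a b)"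
    using swap.IH xt by blast
  also have "\<dots> = - of_int (sign p) * f x" using form_swap[OF x] swap by simp
  also have "sign (Transposition.transpose a b \<circ> p) = - sign p"
    using swap by (simp add: sign_compose permutes_imp_permutation[OF finite_lessThan] sign_swap_id permutation_swap_id)
  ultimately show "f (x \<circ> (Transposition.transpose a b \<circ> p)) = of_int (sign (Transposition.transpose a b \<circ> p)) * f x" by simp
  qed
qed
  then show ?thesis using x by blast
qed

end

(* ---- part B ---- *)
section \<open>Forms as a linear space, k-vectors\<close>

lemma Forms_lin:
  assumes "f \<in> Forms (+) (*\<^sub>R) U k" "g \<in> Forms (+) (*\<^sub>R) U k"
  shows "(\<lambda>x. c * f x + g x) \<in> Forms (+) (*\<^sub>R) U k"
proof -
  have f: "altform (+) (*\<^sub>R) U k f" and g: "altform (+) (*\<^sub>R) U k g"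
    using assms unfolding Forms_def by auto
  note f1 = f[unfolded altform_def, THEN conjunct1, rule_format]
  note f2 = f[unfolded altform_def, THEN conjunct2, THEN conjunct1, rule_format]
  note f3 = f[unfolded altform_def, THEN conjunct2, THEN conjunct2, THEN conjunct1, rule_format]
  note f4 = f[unfolded altform_def, THEN conjunct2, THEN conjunct2, THEN conjunct2, rule_format]
  note g1 = g[unfolded altform_def, THEN conjunct1, rule_format]
  note g2 = g[unfolded altform_def, THEN conjunct2, THEN conjunct1, rule_format]
  note g3 = g[unfolded altform_def, THEN conjunct2, THEN conjunct2, THEN conjunct1, rule_format]
  note g4 = g[unfolded altform_def, THEN conjunct2, THEN conjunct2, THEN conjunct2, rule_format]
  show ?thesis unfolding Forms_def altform_def
  proof (intro CollectI conjI allI impI)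
    fix x y :: "nat \<Rightarrow> 'a" assume "\<forall>i<k. x i = y i"
    then show "c * f x + g x = c * f y + g y" using f1[of x y] g1[of x y] by simp
  next
    fix x :: "nat \<Rightarrow> 'a" assume "\<not> inU U k x"
    then show "c * f x + g x = 0" using f2[of x] g2[of x] by simp
  next
    fix x :: "nat \<Rightarrow> 'a" and i a b d
    assume h: "inU U k x \<and> i < k \<and> a \<in> U \<and> b \<in> U"
    have "f (x(i := d *\<^sub>R a + b)) = d * f (x(i := a)) + f (x(i := b))"
      "g (x(i := d *\<^sub>R a + b)) = d * g (x(i := a)) + g (x(i := b))"
      using f3[OF h] g3[OF h] by auto
    then show "c * f (x(i := d *\<^sub>R a + b)) + g (x(i := d *\<^sub>R a + b)) =
       d * (c * f (x(i := a)) + g (x(i := a))) + (c * f (x(i := b)) + g (x(i := b)))"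
      by (simp add: algebra_simps)
  next
    fix x :: "nat \<Rightarrow> 'a" and i j
    assume h: "inU U k x \<and> i < k \<and> j < k \<and> i \<noteq> j \<and> x i = x j"
    then show "c * f x + g x = 0" using f4[OF h] g4[OF h] by simp
  qed
qed

lemma Forms_zero: "(\<lambda>x. 0) \<in> Forms (+) (*\<^sub>R) U k"
  unfolding Forms_def altform_def by auto

lemma Forms_scale:
  assumes "f \<in> Forms (+) (*\<^sub>R) U k"
  shows "(\<lambda>x. c * f x) \<in> Forms (+) (*\<^sub>R) U k"
  using Forms_lin[OF assms Forms_zero, of c] by simp

lemma Forms_add:
  assumes "f \<in> Forms (+) (*\<^sub>R) U k" "g \<in> Forms (+) (*\<^sub>R) U k"
  shows "(\<lambda>x. f x + g x) \<in> Forms (+) (*\<^sub>R) U k"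
  using Forms_lin[OF assms, of 1] by simp

lemma Forms_sum:
  assumes "finite J" "\<And>j. j \<in> J \<Longrightarrow> f j \<in> Forms (+) (*\<^sub>R) U k"
  shows "(\<lambda>x. \<Sum>j\<in>J. c j * f j x) \<in> Forms (+) (*\<^sub>R) U k"
  using assms
proof (induction J rule: finite_induct)
  case empty then show ?case using Forms_zero by simp
next
  case (insert j J)
  have "(\<lambda>x. c j * f j x + (\<Sum>j\<in>J. c j * f j x)) \<in> Forms (+) (*\<^sub>R) U k"
    using insert by (intro Forms_lin) auto
  then show ?case using insert by simp
qed

context
  fixes Z U k
  assumes Z: "Z \<in> Kvecs (+) (*\<^sub>R) U k"
begin

lemma kv_lin: "f \<in> Forms (+) (*\<^sub>R) U k \<Longrightarrow> g \<in> Forms (+) (*\<^sub>R) U k \<Longrightarrow>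
   Z (\<lambda>x. c * f x + g x) = c * Z f + Z g"
  using Z unfolding Kvecs_def by blast

lemma kv_zero: "Z (\<lambda>x. 0) = 0"
  using kv_lin[OF Forms_zero Forms_zero, of 2] by simp

lemma kv_scale: "f \<in> Forms (+) (*\<^sub>R) U k \<Longrightarrow> Z (\<lambda>x. c * f x) = c * Z f"
  using kv_lin[OF _ Forms_zero, of f c] kv_zero by simp

lemma kv_add: "f \<in> Forms (+) (*\<^sub>R) U k \<Longrightarrow> g \<in> Forms (+) (*\<^sub>R) U k \<Longrightarrow>
   Z (\<lambda>x. f x + g x) = Z f + Z g"
  using kv_lin[of f g 1] by simp

lemma kv_sum:
  assumes "finite J" "\<And>j. j \<in> J \<Longrightarrow> f j \<in> Forms (+) (*\<^sub>R) U k"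
  shows "Z (\<lambda>x. \<Sum>j\<in>J. c j * f j x) = (\<Sum>j\<in>J. c j * Z (f j))"
  using assms
proof (induction J rule: finite_induct)
  case empty then show ?case using kv_zero by simp
next
  case (insert j J)
  have "Z (\<lambda>x. c j * f j x + (\<Sum>j\<in>J. c j * f j x)) = c j * Z (f j) + Z (\<lambda>x. \<Sum>j\<in>J. c j * f j x)"
    using insert by (intro kv_lin Forms_sum) auto
  then show ?case using insert by simp
qed

end

lemma Kvecs_lin: "Z \<in> Kvecs (+) (*\<^sub>R) U k \<Longrightarrow> Z' \<in> Kvecs (+) (*\<^sub>R) U k \<Longrightarrow>
   (\<lambda>g. c * Z g + Z' g) \<in> Kvecs (+) (*\<^sub>R) U k"
  unfolding Kvecs_def by (auto simp: algebra_simps)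

lemma Kvecs_zero: "(\<lambda>g. 0) \<in> Kvecs (+) (*\<^sub>R) U k"
  unfolding Kvecs_def by auto

lemma Kvecs_ev: "(\<lambda>g. g y) \<in> Kvecs (+) (*\<^sub>R) U k"
  unfolding Kvecs_def by auto

lemma Kvecs_comb: "finite J \<Longrightarrow> (\<lambda>g. \<Sum>j\<in>J. c j * g (y j)) \<in> Kvecs (+) (*\<^sub>R) U k"
  unfolding Kvecs_def by (auto simp: algebra_simps sum.distrib sum_distrib_left)

section \<open>Wedge products of covectors as determinants\<close>

lemma wedge_det: "wedge_cov k F x = det (mat k k (\<lambda>(i,j). F i (\<lambda>_. x j)))"
  unfolding wedge_cov_def det_def by (auto simp: atLeast0LessThan intro!: sum.cong prod.cong)

definition Dw :: "nat \<Rightarrow> (nat \<Rightarrow> 'v::real_inner) \<Rightarrow> (nat \<Rightarrow> 'v) \<Rightarrow> real" where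
  "Dw k a u = wedge_cov k (\<lambda>i y. a i \<bullet> y 0) u"

lemma Dw_det: "Dw k a u = det (mat k k (\<lambda>(i,j). a i \<bullet> u j))"
  unfolding Dw_def wedge_det by simp

lemma Dw_transpose: "Dw k a u = Dw k u a"
proof -
  have "mat k k (\<lambda>(i,j). u i \<bullet> a j) = transpose_mat (mat k k (\<lambda>(i,j). a i \<bullet> u j))"
    by (auto simp: inner_commute)
  then show ?thesis unfolding Dw_det by (metis det_transpose mat_carrier)
qed

lemma Dw_row_ident: "i < k \<Longrightarrow> j < k \<Longrightarrow> i \<noteq> j \<Longrightarrow> a i = a j \<Longrightarrow> Dw k a u = 0"
  unfolding Dw_det by (rule det_identical_rows[of _ k i j]) (auto simp: Matrix.row_def)

lemma Dw_col_ident: "i < k \<Longrightarrow> j < k \<Longrightarrow> i \<noteq> j \<Longrightarrow> u i = u j \<Longrightarrow> Dw k a u = 0"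
  using Dw_row_ident[of i k j u a] Dw_transpose by metis

lemma Dw_row_lin:
  assumes i: "i < k"
  shows "Dw k (a(i := c *\<^sub>R b + b')) u = c * Dw k (a(i := b)) u + Dw k (a(i := b')) u"
proof -
  have "(\<Prod>l<k. (a(i := c *\<^sub>R b + b')) l \<bullet> u (\<sigma> l)) =
     c * (\<Prod>l<k. (a(i := b)) l \<bullet> u (\<sigma> l)) + (\<Prod>l<k. (a(i := b')) l \<bullet> u (\<sigma> l))" for \<sigma>
  proof -
    let ?R = "\<Prod>l\<in>{..<k}-{i}. a l \<bullet> u (\<sigma> l)"
    have e: "(\<Prod>l<k. (a(i := z)) l \<bullet> u (\<sigma> l)) = (z \<bullet> u (\<sigma> i)) * ?R" for z
    proof -
      have "(\<Prod>l<k. (a(i := z)) l \<bullet> u (\<sigma> l)) = (a(i := z)) i \<bullet> u (\<sigma> i) * (\<Prod>l\<in>{..<k}-{i}. (a(i := z)) l \<bullet> u (\<sigma> l))"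
        using i by (subst prod.remove[of _ i]) auto
      also have "(\<Prod>l\<in>{..<k}-{i}. (a(i := z)) l \<bullet> u (\<sigma> l)) = ?R"
        by (intro prod.cong) (auto simp: fun_upd_def)
      finally show ?thesis by (simp add: fun_upd_def)
    qed
    show ?thesis unfolding e by (simp add: inner_add_left algebra_simps)
  qed
  then show ?thesis unfolding Dw_def wedge_cov_def
    by (simp add: sum.distrib sum_distrib_left algebra_simps)
qed

lemma Dw_col_lin:
  assumes i: "i < k"
  shows "Dw k a (u(i := c *\<^sub>R b + b')) = c * Dw k a (u(i := b)) + Dw k a (u(i := b'))"
  using Dw_row_lin[OF i, of u c b b' a] Dw_transpose by metis

lemma Dw_cong: "(\<And>i. i < k \<Longrightarrow> u i = u' i) \<Longrightarrow> Dw k a u = Dw k a u'"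
  unfolding Dw_det by (intro arg_cong[where f=det]) auto

lemma Dw_cong_row: "(\<And>i. i < k \<Longrightarrow> a i = a' i) \<Longrightarrow> Dw k a u = Dw k a' u"
  unfolding Dw_det by (intro arg_cong[where f=det]) auto

definition DwP :: "nat \<Rightarrow> 'v::real_inner set \<Rightarrow> (nat \<Rightarrow> 'v) \<Rightarrow> (nat \<Rightarrow> 'v) \<Rightarrow> real" where
  "DwP k P a = (\<lambda>u. if inU P k u then Dw k a u else 0)"

lemma DwP_form:
  assumes P: "subspace P"
  shows "DwP k P a \<in> Forms (+) (*\<^sub>R) P k"
  unfolding Forms_def altform_def DwP_def
proof (intro CollectI conjI allI impI)
  fix x y :: "nat \<Rightarrow> 'a" assume "\<forall>i<k. x i = y i"
  then show "(if inU P k x then Dw k a x else 0) = (if inU P k y then Dw k a y else 0)"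
    using Dw_cong[of k x y a] by auto
next
  fix x :: "nat \<Rightarrow> 'a" assume "\<not> inU P k x"
  then show "(if inU P k x then Dw k a x else 0) = 0" by auto
next
  fix x :: "nat \<Rightarrow> 'a" and i aa b c
  assume h: "inU P k x \<and> i < k \<and> aa \<in> P \<and> b \<in> P"
  then have "c *\<^sub>R aa + b \<in> P" using P by (simp add: subspace_add subspace_scale)
  then show "(if inU P k (x(i := c *\<^sub>R aa + b)) then Dw k a (x(i := c *\<^sub>R aa + b)) else 0) =
    c * (if inU P k (x(i := aa)) then Dw k a (x(i := aa)) else 0) + (if inU P k (x(i := b)) then Dw k a (x(i := b)) else 0)"
    using h Dw_col_lin[of i k a x c aa b] by (auto simp: fun_upd_def)
next
  fix x :: "nat \<Rightarrow> 'a" and i j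
  assume "inU P k x \<and> i < k \<and> j < k \<and> i \<noteq> j \<and> x i = x j"
  then show "(if inU P k x then Dw k a x else 0) = 0" using Dw_col_ident[of i k j x a] by auto
qed

lemma wedge_zero_col:
  assumes j: "j < k" and z: "\<And>i. i < k \<Longrightarrow> F i (\<lambda>_. x j) = 0"
  shows "wedge_cov k F x = 0"
  unfolding wedge_cov_def
proof (intro sum.neutral ballI)
  fix \<sigma> assume "\<sigma> \<in> {\<sigma>. \<sigma> permutes {..<k}}"
  then have s: "\<sigma> permutes {..<k}" by simp
  have "Hilbert_Choice.inv \<sigma> j < k" using s j by (meson lessThan_iff permutes_in_image permutes_inv)
  moreover have "\<sigma> (Hilbert_Choice.inv \<sigma> j) = j" using s by (meson permutes_inverses(1))
  ultimately have "(\<Prod>i<k. F i (\<lambda>_. x (\<sigma> i))) = 0"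
    using z by (intro prod_zero) (auto intro!: bexI[of _ "Hilbert_Choice.inv \<sigma> j"])
  then show "of_int (sign \<sigma>) * (\<Prod>i<k. F i (\<lambda>_. x (\<sigma> i))) = 0" by simp
qed

lemma Dw_cramer:
  assumes nz: "Dw k a u \<noteq> 0" and z: "\<And>l. l < k \<Longrightarrow> Dw k a (u(l := v)) = 0" and i: "i < k"
  shows "a i \<bullet> v = 0"
proof -
  define M where "M = mat k k (\<lambda>(i,j). a i \<bullet> u j)"
  define c where "c = vec k (\<lambda>i. a i \<bullet> v)"
  have M: "M \<in> carrier_mat k k" unfolding M_def by simp
  have c: "c \<in> carrier_vec k" unfolding c_def by simp
  have dM: "det M \<noteq> 0" using nz unfolding Dw_det M_def .
  from det_non_zero_imp_unit[OF M dM, of "()"]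
  obtain B where BM: "M * B = 1\<^sub>m k" and B: "B \<in> carrier_mat k k"
    unfolding Units_def ring_mat_def by auto
  define x where "x = B *\<^sub>v c"
  have x: "x \<in> carrier_vec k" unfolding x_def using B c by simp
  have Mx: "M *\<^sub>v x = c" unfolding x_def
    using assoc_mult_mat_vec[OF M B c] BM c by simp
  have "x $ l = 0" if l: "l < k" for l
  proof -
    have "replace_col M c l = mat k k (\<lambda>(i,j). a i \<bullet> (u(l := v)) j)"
      unfolding replace_col_def M_def c_def using l by (auto simp: fun_upd_def)
    then have "det (replace_col M c l) = 0" using z[OF l] unfolding Dw_det by simp
    then have "x $ l * det M = 0" using cramer_lemma_mat[OF M x l] Mx by simp
    then show ?thesis using dM by simp
  qed
  then have "x = 0\<^sub>v k" using x by (intro eq_vecI) auto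
  then have "c = 0\<^sub>v k" using Mx M c by (intro eq_vecI) (auto simp: scalar_prod_def)
  then have "c $ i = 0" using i by simp
  then show ?thesis unfolding c_def using i by simp
qed

(* ---- part C ---- *)
definition shiftins :: "nat \<Rightarrow> 'a \<Rightarrow> (nat \<Rightarrow> 'a) \<Rightarrow> nat \<Rightarrow> 'a" where
  "shiftins j v x = (\<lambda>i. if i < j then x i else if i = j then v else x (i - 1))"

lemma contr_vec_shiftins: "contr_vec f v = (\<lambda>x. f (shiftins 0 v x))"
  unfolding contr_vec_def shiftins_def by simp

lemma inU_shiftins: "v \<in> U \<Longrightarrow> inU U k x \<Longrightarrow> inU U (Suc k) (shiftins 0 v x)"
  unfolding shiftins_def by auto

lemma not_inU_shiftins: "\<not> inU U k x \<Longrightarrow> \<not> inU U (Suc k) (shiftins 0 v x)"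
proof -
  assume "\<not> inU U k x"
  then obtain i where "i < k" "x i \<notin> U" by auto
  moreover have "shiftins 0 v x (Suc i) = x i" unfolding shiftins_def by simp
  ultimately show ?thesis by (metis Suc_less_eq)
qed

lemma not_inU_upd: "\<not> inU U k x \<Longrightarrow> \<not> inU U (Suc k) (x(k := z))"
proof -
  assume "\<not> inU U k x"
  then obtain i where "i < k" "x i \<notin> U" by auto
  then show ?thesis by (metis fun_upd_other less_Suc_eq less_irrefl)
qed

lemma form_shift:
  assumes f: "f \<in> Forms (+) (*\<^sub>R) U (Suc k)" and U: "subspace U" and v: "v \<in> U" and x: "inU U k x"
  shows "f (shiftins 0 v x) = (-1) ^ k * f (x(k := v))"
proof -
  have "j \<le> k \<Longrightarrow> f (shiftins j v x) = (-1) ^ j * f (shiftins 0 v x)" for j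
  proof (induction j)
    case 0 then show ?case by simp
  next
    case (Suc j)
    have e: "shiftins (Suc j) v x = shiftins j v x \<circ> Transposition.transpose j (Suc j)"
      by (auto simp: fun_eq_iff shiftins_def Transposition.transpose_def)
    have i: "inU U (Suc k) (shiftins j v x)" using x v Suc.prems by (auto simp: shiftins_def)
    have "f (shiftins (Suc j) v x) = - f (shiftins j v x)"
      unfolding e using Suc.prems by (intro form_swap[OF f U i]) auto
    then show ?case using Suc by simp
  qed
  from this[of k] have "f (shiftins k v x) = (-1) ^ k * f (shiftins 0 v x)" by simp
  moreover have "f (shiftins k v x) = f (x(k := v))"
    by (intro form_cong[OF f U]) (auto simp: shiftins_def fun_upd_def)
  ultimately show ?thesis by (metis mult.assoc mult_1 power_minus1_even power_add mult_2[symmetric] left_minus_one_mult_self)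
qed

text \<open>Contraction in the last slot.\<close>
lemma contr_form:
  assumes f: "f \<in> Forms (+) (*\<^sub>R) U (Suc k)" and U: "subspace U" and w: "w \<in> U"
  shows "(\<lambda>x. f (x(k := w))) \<in> Forms (+) (*\<^sub>R) U k"
  unfolding Forms_def altform_def
proof (intro CollectI conjI allI impI)
  fix x y :: "nat \<Rightarrow> 'a" assume "\<forall>i<k. x i = y i"
  then show "f (x(k := w)) = f (y(k := w))" by (intro form_cong[OF f U]) (auto simp: fun_upd_def)
next
  fix x :: "nat \<Rightarrow> 'a" assume "\<not> inU U k x"
  then show "f (x(k := w)) = 0" by (intro form_out[OF f U]) (auto simp: fun_upd_def)
next
  fix x :: "nat \<Rightarrow> 'a" and i a b c
  assume h: "inU U k x \<and> i < k \<and> a \<in> U \<and> b \<in> U"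
  have xk: "inU U (Suc k) (x(k := w))" using h w by (auto simp: fun_upd_def)
  have "f ((x(k := w))(i := c *\<^sub>R a + b)) = c * f ((x(k := w))(i := a)) + f ((x(k := w))(i := b))"
    using h by (intro form_lin[OF f U xk]) auto
  moreover have "(x(k := w))(i := z) = (x(i := z))(k := w)" for z using h by (auto simp: fun_eq_iff)
  ultimately show "f ((x(i := c *\<^sub>R a + b))(k := w)) = c * f ((x(i := a))(k := w)) + f ((x(i := b))(k := w))"
    by metis
next
  fix x :: "nat \<Rightarrow> 'a" and i j
  assume h: "inU U k x \<and> i < k \<and> j < k \<and> i \<noteq> j \<and> x i = x j"
  then show "f (x(k := w)) = 0" using w by (intro form_alt[OF f U, of _ i j]) (auto simp: fun_upd_def)
qed

lemma contr_form_out: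
  assumes f: "f \<in> Forms (+) (*\<^sub>R) U (Suc k)" and U: "subspace U" and w: "w \<notin> U"
  shows "(\<lambda>x. f (x(k := w))) = (\<lambda>x. 0)"
  using w by (intro ext form_out[OF f U]) auto

lemma contr_kvec_out:
  assumes f: "f \<in> Forms (+) (*\<^sub>R) U (Suc k)" and U: "subspace U" and w: "w \<notin> U"
    and Z: "Z \<in> Kvecs (+) (*\<^sub>R) U k"
  shows "contr_kvec k f Z (\<lambda>_. w) = 0"
  unfolding contr_kvec_def using contr_form_out[OF f U w] kv_zero[OF Z] by simp

lemma contr_kvec_lin:
  assumes f: "f \<in> Forms (+) (*\<^sub>R) U (Suc k)" and U: "subspace U" and a: "a \<in> U" and b: "b \<in> U"
    and Z: "Z \<in> Kvecs (+) (*\<^sub>R) U k"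
  shows "contr_kvec k f Z (\<lambda>_. c *\<^sub>R a + b) = c * contr_kvec k f Z (\<lambda>_. a) + contr_kvec k f Z (\<lambda>_. b)"
proof -
  have "(\<lambda>x. f (x(k := c *\<^sub>R a + b))) = (\<lambda>x. c * f (x(k := a)) + f (x(k := b)))"
  proof
    fix x :: "nat \<Rightarrow> 'a"
    show "f (x(k := c *\<^sub>R a + b)) = c * f (x(k := a)) + f (x(k := b))"
    proof (cases "inU U k x")
      case True
      then have xk: "inU U (Suc k) (x(k := a))" using a by (auto simp: fun_upd_def)
      have "f ((x(k := a))(k := c *\<^sub>R a + b)) = c * f ((x(k := a))(k := a)) + f ((x(k := a))(k := b))"
        using a b by (intro form_lin[OF f U xk]) auto
      then show ?thesis by (simp only: fun_upd_upd)
    next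
      case False
      have "f (x(k := z)) = 0" for z using form_out[OF f U not_inU_upd[OF False]] .
      then show ?thesis by simp
    qed
  qed
  then show ?thesis unfolding contr_kvec_def
    using kv_lin[OF Z contr_form[OF f U a] contr_form[OF f U b]] by simp
qed

lemma contr_vec_eq:
  assumes f: "f \<in> Forms (+) (*\<^sub>R) U (Suc k)" and U: "subspace U" and v: "v \<in> U"
  shows "contr_vec f v = (\<lambda>x. (-1) ^ k * f (x(k := v)))"
proof
  fix x :: "nat \<Rightarrow> 'a"
  show "contr_vec f v x = (-1) ^ k * f (x(k := v))"
  proof (cases "inU U k x")
    case True
    then show ?thesis unfolding contr_vec_shiftins using form_shift[OF f U v] by simp
  next
    case False
    have "f (x(k := v)) = 0" using form_out[OF f U not_inU_upd[OF False]] .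
    moreover have "f (shiftins 0 v x) = 0" using form_out[OF f U not_inU_shiftins[OF False]] .
    ultimately show ?thesis unfolding contr_vec_shiftins by simp
  qed
qed

lemma contr_vec_form:
  assumes f: "f \<in> Forms (+) (*\<^sub>R) U (Suc k)" and U: "subspace U" and v: "v \<in> U"
  shows "contr_vec f v \<in> Forms (+) (*\<^sub>R) U k"
  unfolding contr_vec_eq[OF f U v] by (intro Forms_scale contr_form[OF f U v])

lemma null_slot:
  assumes f: "f \<in> Forms (+) (*\<^sub>R) U (Suc k)" and U: "subspace U" and \<kappa>: "\<kappa> \<in> U"
    and n: "\<And>z. inU U k z \<Longrightarrow> f (z(k := \<kappa>)) = 0"
    and x: "inU U (Suc k) x" and i: "i \<le> k"
  shows "f (x(i := \<kappa>)) = 0"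
proof (cases "i = k")
  case True
  then show ?thesis using n[of x] x by auto
next
  case False
  then have ik: "i < k" using i by simp
  let ?y = "x(i := \<kappa>)"
  have y: "inU U (Suc k) ?y" using x \<kappa> by (auto simp: fun_upd_def)
  have h: "f (?y \<circ> Transposition.transpose i k) = - f ?y"
    using ik by (intro form_swap[OF f U y]) auto
  have "f ?y = - f (?y \<circ> Transposition.transpose i k)" using h by linarith
  also have "?y \<circ> Transposition.transpose i k = (x(i := x k))(k := \<kappa>)"
    using ik by (auto simp: fun_eq_iff Transposition.transpose_def)
  also have "f \<dots> = 0" using n[of "x(i := x k)"] x by (auto simp: fun_upd_def)
  finally show ?thesis by (simp add: fun_upd_def)
qed

section \<open>Euclidean facts\<close>

lemma lin_on_sum:
  assumes U: "subspace U" and \<phi>: "\<And>a b c. a \<in> U \<Longrightarrow> b \<in> U \<Longrightarrow> \<phi> (c *\<^sub>R a + b) = c * \<phi> a + \<phi> b"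
    and B: "finite B" "B \<subseteq> U"
  shows "\<phi> (\<Sum>e\<in>B. c e *\<^sub>R e) = (\<Sum>e\<in>B. c e * \<phi> e)"
  using B
proof (induction B rule: finite_induct)
  case empty
  have "\<phi> (1 *\<^sub>R 0 + 0) = 1 * \<phi> 0 + \<phi> 0" using \<phi>[of 0 0 1] U by (simp add: subspace_0)
  then show ?case by simp
next
  case (insert e B)
  have s: "(\<Sum>e\<in>B. c e *\<^sub>R e) \<in> U" using insert U by (intro subspace_sum subspace_scale) auto
  show ?case using insert \<phi>[OF _ s, of e "c e"] by simp
qed

lemma riesz_sub:
  fixes U :: "'v::euclidean_space set"
  assumes U: "subspace U" and \<phi>: "\<And>a b c. a \<in> U \<Longrightarrow> b \<in> U \<Longrightarrow> \<phi> (c *\<^sub>R a + b) = c * \<phi> a + \<phi> b"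
  obtains y where "y \<in> U" "\<And>u. u \<in> U \<Longrightarrow> \<phi> u = y \<bullet> u"
proof -
  obtain B where B: "B \<subseteq> U" "pairwise real_inner_class.orthogonal B" "\<And>x. x \<in> B \<Longrightarrow> norm x = 1"
    "independent B" "span B = U"
    using orthonormal_basis_subspace[OF U] by metis
  have fB: "finite B" using B(4) independent_imp_finite by blast
  define y where "y = (\<Sum>e\<in>B. \<phi> e *\<^sub>R e)"
  have "y \<in> U" unfolding y_def using B(1) U by (intro subspace_sum subspace_scale) auto
  moreover have "\<phi> u = y \<bullet> u" if u: "u \<in> U" for u
  proof -
    have "u = (\<Sum>e\<in>B. (u \<bullet> e) *\<^sub>R e)"
      using orthonormal_basis_expand[OF B(2,3) _ fB] u B(5) by simp
    then have "\<phi> u = (\<Sum>e\<in>B. (u \<bullet> e) * \<phi> e)"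
      using lin_on_sum[OF U \<phi> fB B(1)] by metis
    also have "\<dots> = y \<bullet> u" unfolding y_def by (simp add: inner_sum_right inner_commute mult.commute)
    finally show ?thesis .
  qed
  ultimately show ?thesis using that by blast
qed

lemma proj_sub:
  fixes U :: "'v::euclidean_space set"
  assumes U: "subspace U"
  obtains q where "q \<in> U" "\<And>w. w \<in> U \<Longrightarrow> (x - q) \<bullet> w = 0"
proof -
  obtain y z where "y \<in> span U" "\<And>w. w \<in> span U \<Longrightarrow> real_inner_class.orthogonal z w" "x = y + z"
    using orthogonal_subspace_decomp_exists by metis
  moreover have "span U = U" using U by (simp add: span_eq_iff)
  ultimately show ?thesis using that[of y] by (auto simp: real_inner_class.orthogonal_def)
qed

lemma perp_perp:
  fixes P :: "'v::euclidean_space set"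
  assumes P: "subspace P" and b: "\<And>\<zeta>. (\<And>w. w \<in> P \<Longrightarrow> \<zeta> \<bullet> w = 0) \<Longrightarrow> b \<bullet> \<zeta> = 0"
  shows "b \<in> P"
proof -
  obtain q where q: "q \<in> P" "\<And>w. w \<in> P \<Longrightarrow> (b - q) \<bullet> w = 0" using proj_sub[OF P] by metis
  have "b \<bullet> (b - q) = 0" using b[of "b - q"] q by auto
  moreover have "q \<bullet> (b - q) = 0" using q(2)[OF q(1)] by (simp add: inner_commute)
  ultimately have "(b - q) \<bullet> (b - q) = 0" by (simp add: inner_diff_left)
  then have "b = q" by simp
  then show ?thesis using q by simp
qed

(* ---- part E ---- *)
lemma form_expand:
  fixes U :: "'v::real_vector set"
  assumes g: "g \<in> Forms (+) (*\<^sub>R) U k" and U: "subspace U" and B: "finite B" "B \<subseteq> U"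
    and w: "\<And>i. i < k \<Longrightarrow> w i = (\<Sum>e\<in>B. c i e *\<^sub>R e) + \<kappa> i"
    and \<kappa>: "\<And>i. i < k \<Longrightarrow> \<kappa> i \<in> U"
    and null: "\<And>x i. inU U k x \<Longrightarrow> i < k \<Longrightarrow> g (x(i := \<kappa> i)) = 0"
  shows "g w = (\<Sum>J\<in>PiE {..<k} (\<lambda>_. B). (\<Prod>i<k. c i (J i)) * g J)"
proof -
  define mrg where "mrg m J = (\<lambda>i. if i < m then J i else w i)" for m and J :: "nat \<Rightarrow> 'v"
  have sU: "(\<Sum>e\<in>B. c i e *\<^sub>R e) \<in> U" for i using B U by (intro subspace_sum subspace_scale) auto
  have wU: "w i \<in> U" if "i < k" for i using w[OF that] \<kappa>[OF that] sU U by (simp add: subspace_add)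
  have mU: "inU U k (mrg m J)" if "J \<in> PiE {..<m} (\<lambda>_. B)" for m J
    using that wU B(2) unfolding mrg_def by (auto simp: PiE_def Pi_def)
  have main: "m \<le> k \<Longrightarrow> g w = (\<Sum>J\<in>PiE {..<m} (\<lambda>_. B). (\<Prod>i<m. c i (J i)) * g (mrg m J))" for m
  proof (induction m)
    case 0
    have "mrg 0 J = w" for J unfolding mrg_def by simp
    then show ?case by simp
  next
    case (Suc m)
    then have m: "m < k" by simp
    define F where "F J' = (\<Prod>i<Suc m. c i (J' i)) * g (mrg (Suc m) J')" for J'
    have one: "g (mrg m J) = (\<Sum>e\<in>B. c m e * g (mrg (Suc m) (J(m := e))))"
      if J: "J \<in> PiE {..<m} (\<lambda>_. B)" for J
    proof -
      have x: "inU U k (mrg m J)" using mU[OF J] .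
      have e1: "mrg m J = (mrg m J)(m := (\<Sum>e\<in>B. c m e *\<^sub>R e) + \<kappa> m)"
        using w[OF m] unfolding mrg_def by (auto simp: fun_eq_iff)
      have s0: "g (mrg m J) = g ((mrg m J)(m := (\<Sum>e\<in>B. c m e *\<^sub>R e) + \<kappa> m))"
        by (rule arg_cong[where f=g, OF e1])
      have s1: "g ((mrg m J)(m := (\<Sum>e\<in>B. c m e *\<^sub>R e) + \<kappa> m)) =
          g ((mrg m J)(m := (\<Sum>e\<in>B. c m e *\<^sub>R e))) + g ((mrg m J)(m := \<kappa> m))"
        using x m sU \<kappa>[OF m] by (intro form_add[OF g U]) auto
      have s2: "g ((mrg m J)(m := \<kappa> m)) = 0" using null[OF x m] .
      have s3: "g ((mrg m J)(m := (\<Sum>e\<in>B. c m e *\<^sub>R e))) = (\<Sum>e\<in>B. c m e * g ((mrg m J)(m := e)))"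
        using x m B by (intro form_sum[OF g U]) auto
      have s4: "(mrg m J)(m := e) = mrg (Suc m) (J(m := e))" for e
        unfolding mrg_def by (auto simp: fun_eq_iff)
      show ?thesis using s0 s1 s2 s3 s4 by simp
    qed
    have "g w = (\<Sum>J\<in>PiE {..<m} (\<lambda>_. B). (\<Prod>i<m. c i (J i)) * g (mrg m J))"
      using Suc by simp
    also have "\<dots> = (\<Sum>J\<in>PiE {..<m} (\<lambda>_. B). \<Sum>e\<in>B. F (J(m := e)))"
    proof (intro sum.cong refl)
      fix J assume J: "J \<in> PiE {..<m} (\<lambda>_. B)"
      have p: "(\<Prod>i<Suc m. c i ((J(m := e)) i)) = c m e * (\<Prod>i<m. c i (J i))" for e
        by (simp add: lessThan_Suc prod.insert)
      show "(\<Prod>i<m. c i (J i)) * g (mrg m J) = (\<Sum>e\<in>B. F (J(m := e)))"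
        unfolding one[OF J] F_def p by (simp add: sum_distrib_left algebra_simps)
    qed
    also have "\<dots> = (\<Sum>(e, J)\<in>B \<times> PiE {..<m} (\<lambda>_. B). F (J(m := e)))"
      by (subst sum.cartesian_product[symmetric]) (rule sum.swap)
    also have "\<dots> = (\<Sum>J'\<in>PiE {..<Suc m} (\<lambda>_. B). F J')"
      by (rule sum.reindex_bij_witness[of _ "\<lambda>J'. (J' m, J'(m := undefined))" "\<lambda>(e, J). J(m := e)"])
         (auto simp: PiE_def extensional_def Pi_def lessThan_Suc)
    finally show ?case unfolding F_def .
  qed
  have "g (mrg k J) = g J" for J unfolding mrg_def by (intro form_cong[OF g U]) auto
  then show ?thesis using main[of k] by simp
qed

lemma antisym_expand:
  fixes U :: "'v::euclidean_space set"
  assumes g: "g \<in> Forms (+) (*\<^sub>R) U k" and U: "subspace U"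
    and B: "finite B" "B \<subseteq> U" "pairwise real_inner_class.orthogonal B" "\<And>e. e \<in> B \<Longrightarrow> norm e = 1"
    and null: "\<And>\<kappa> x i. \<kappa> \<in> U \<Longrightarrow> (\<And>q. q \<in> span B \<Longrightarrow> \<kappa> \<bullet> q = 0) \<Longrightarrow> inU U k x \<Longrightarrow> i < k \<Longrightarrow> g (x(i := \<kappa>)) = 0"
    and u: "inU U k u"
  shows "(\<Sum>J\<in>PiE {..<k} (\<lambda>_. B). g J * Dw k J u) = fact k * g u"
proof -
  let ?P = "{\<sigma>. \<sigma> permutes {..<k}}"
  have "(\<Sum>J\<in>PiE {..<k} (\<lambda>_. B). g J * Dw k J u) =
      (\<Sum>J\<in>PiE {..<k} (\<lambda>_. B). \<Sum>\<sigma>\<in>?P. of_int (sign \<sigma>) * ((\<Prod>i<k. u (\<sigma> i) \<bullet> J i) * g J))"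
    unfolding Dw_def wedge_cov_def
    by (intro sum.cong refl) (simp add: sum_distrib_left algebra_simps inner_commute)
  also have "\<dots> = (\<Sum>\<sigma>\<in>?P. of_int (sign \<sigma>) * (\<Sum>J\<in>PiE {..<k} (\<lambda>_. B). (\<Prod>i<k. u (\<sigma> i) \<bullet> J i) * g J))"
    by (subst sum.swap) (simp add: sum_distrib_left)
  also have "\<dots> = (\<Sum>\<sigma>\<in>?P. of_int (sign \<sigma>) * g (u \<circ> \<sigma>))"
  proof (intro sum.cong refl arg_cong[where f="\<lambda>x. _ * x"])
    fix \<sigma> assume "\<sigma> \<in> ?P"
    then have s: "\<sigma> permutes {..<k}" by simp
    have sk: "\<sigma> i < k" if "i < k" for i using s that by (meson lessThan_iff permutes_in_image)
    define \<kappa> where "\<kappa> i = u (\<sigma> i) - (\<Sum>e\<in>B. (u (\<sigma> i) \<bullet> e) *\<^sub>R e)" for i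
    have sU: "(\<Sum>e\<in>B. c e *\<^sub>R e) \<in> U" for c using B U by (intro subspace_sum subspace_scale) auto
    have \<kappa>U: "\<kappa> i \<in> U" if "i < k" for i
      unfolding \<kappa>_def using u sk[OF that] sU U by (intro subspace_diff) auto
    have \<kappa>perp: "\<kappa> i \<bullet> q = 0" if "q \<in> span B" for i q
    proof -
      have q: "q = (\<Sum>e\<in>B. (q \<bullet> e) *\<^sub>R e)"
        using orthonormal_basis_expand[OF B(3,4) that B(1)] by simp
      have "(\<Sum>e\<in>B. (u (\<sigma> i) \<bullet> e) *\<^sub>R e) \<bullet> q = u (\<sigma> i) \<bullet> q"
        by (subst (2) q) (simp add: inner_sum_left inner_sum_right inner_commute mult.commute)
      then show ?thesis unfolding \<kappa>_def by (simp add: inner_diff_left)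
    qed
    show "(\<Sum>J\<in>PiE {..<k} (\<lambda>_. B). (\<Prod>i<k. u (\<sigma> i) \<bullet> J i) * g J) = g (u \<circ> \<sigma>)"
    proof (rule form_expand[OF g U B(1,2), of "u \<circ> \<sigma>" "\<lambda>i e. u (\<sigma> i) \<bullet> e" \<kappa>, symmetric])
      show "(u \<circ> \<sigma>) i = (\<Sum>e\<in>B. (u (\<sigma> i) \<bullet> e) *\<^sub>R e) + \<kappa> i" for i unfolding \<kappa>_def by simp
      show "\<kappa> i \<in> U" if "i < k" for i using \<kappa>U[OF that] .
      show "g (x(i := \<kappa> i)) = 0" if "inU U k x" "i < k" for x i
        using null[OF \<kappa>U[OF that(2)] \<kappa>perp that] .
    qed
  qed
  also have "\<dots> = (\<Sum>\<sigma>\<in>?P. g u)"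
  proof (intro sum.cong refl)
    fix \<sigma> assume "\<sigma> \<in> ?P"
    then have "g (u \<circ> \<sigma>) = of_int (sign \<sigma>) * g u" using form_perm[OF g U _ u] by simp
    moreover have "(of_int (sign \<sigma>) :: real) * of_int (sign \<sigma>) = 1"
      by (metis of_int_1 of_int_mult sign_idempotent)
    ultimately show "of_int (sign \<sigma>) * g (u \<circ> \<sigma>) = g u" by (metis mult.assoc mult_1)
  qed
  also have "\<dots> = fact k * g u" using card_permutations[of "{..<k}" k] by simp
  finally show ?thesis .
qed

(* ---- part F ---- *)
definition Lv :: "nat \<Rightarrow> 'v::real_inner set \<Rightarrow> ((nat \<Rightarrow> 'v) \<Rightarrow> real) \<Rightarrow> ((((nat \<Rightarrow> 'v) \<Rightarrow> real) \<Rightarrow> real) \<times> 'v) set" where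
  "Lv k P Om = {(Z, a). Z \<in> Kvecs (+) (*\<^sub>R) P k \<and> (\<forall>w\<in>P. contr_kvec k Om Z (\<lambda>_. w) = a \<bullet> w)}"

definition Sv :: "nat \<Rightarrow> 'v::real_inner set \<Rightarrow> ((nat \<Rightarrow> 'v) \<Rightarrow> real) \<Rightarrow> 'v set" where
  "Sv k P Om = {a. \<exists>Z. (Z, a) \<in> Lv k P Om}"

definition restrict_v :: "nat \<Rightarrow> 'v::real_inner set \<Rightarrow> 'v set \<Rightarrow> (((nat \<Rightarrow> 'v) \<Rightarrow> real) \<Rightarrow> real) \<Rightarrow> (nat \<Rightarrow> 'v) \<Rightarrow> real" where
  "restrict_v k P S Z = (\<lambda>\<xi>. if inU S k \<xi> then Z (DwP k P \<xi>) else 0)"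

definition isPi_v :: "nat \<Rightarrow> 'v::real_inner set \<Rightarrow> ((nat \<Rightarrow> 'v) \<Rightarrow> real) \<Rightarrow> ((nat \<Rightarrow> 'v) \<Rightarrow> real) \<Rightarrow> bool" where
  "isPi_v k P Om Pv \<longleftrightarrow> Pv \<in> Forms (+) (*\<^sub>R) (Sv k P Om) (Suc k) \<and>
     (\<forall>(Z, a) \<in> Lv k P Om. contr_vec Pv a = restrict_v k P (Sv k P Om) Z)"

lemma DwP_cong_row: "(\<And>i. i < k \<Longrightarrow> a i = a' i) \<Longrightarrow> DwP k P a = DwP k P a'"
  unfolding DwP_def using Dw_cong_row by metis

lemma forms_unique:
  assumes S: "subspace S" and f: "f \<in> Forms (+) (*\<^sub>R) S (Suc k)" and g: "g \<in> Forms (+) (*\<^sub>R) S (Suc k)"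
    and e: "\<And>a. a \<in> S \<Longrightarrow> contr_vec f a = contr_vec g a"
  shows "f = g"
proof
  fix x :: "nat \<Rightarrow> 'a"
  show "f x = g x"
  proof (cases "x 0 \<in> S")
    case True
    have x: "x = shiftins 0 (x 0) (\<lambda>i. x (Suc i))" by (auto simp: fun_eq_iff shiftins_def)
    have "f x = contr_vec f (x 0) (\<lambda>i. x (Suc i))" unfolding contr_vec_shiftins using x by simp
    also have "\<dots> = contr_vec g (x 0) (\<lambda>i. x (Suc i))" using e[OF True] by simp
    also have "\<dots> = g x" unfolding contr_vec_shiftins using x by simp
    finally show ?thesis .
  next
    case False
    then have "\<not> inU S (Suc k) x" by auto
    then show ?thesis using form_out[OF f S] form_out[OF g S] by metis
  qed
qed

locale dirac =
  fixes k :: nat and P :: "'v::euclidean_space set" and Om :: "(nat \<Rightarrow> 'v) \<Rightarrow> real"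
  assumes k: "0 < k" and LD: "linear_dirac (Suc k) P Om"
begin

lemma P: "subspace P" using LD unfolding linear_dirac_def by simp
lemma Om: "Om \<in> Forms (+) (*\<^sub>R) P (Suc k)" using LD unfolding linear_dirac_def by simp
lemma H: "(\<And>i. i < k \<Longrightarrow> Zs i \<in> Kvecs (+) (*\<^sub>R) P k) \<Longrightarrow>
   \<exists>v\<in>P. wedge_cov k (\<lambda>i. contr_kvec k Om (Zs i)) = contr_vec Om v"
  using LD unfolding linear_dirac_def by simp

abbreviation "S \<equiv> Sv k P Om"
abbreviation "L \<equiv> Lv k P Om"

lemma LLD: "(Z, a) \<in> L \<Longrightarrow> Z \<in> Kvecs (+) (*\<^sub>R) P k" "(Z, a) \<in> L \<Longrightarrow> w \<in> P \<Longrightarrow> contr_kvec k Om Z (\<lambda>_. w) = a \<bullet> w"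
  unfolding Lv_def by auto

lemma contr_lin: "Z \<in> Kvecs (+) (*\<^sub>R) P k \<Longrightarrow> a \<in> P \<Longrightarrow> b \<in> P \<Longrightarrow>
   contr_kvec k Om Z (\<lambda>_. c *\<^sub>R a + b) = c * contr_kvec k Om Z (\<lambda>_. a) + contr_kvec k Om Z (\<lambda>_. b)"
  using contr_kvec_lin[OF Om P] by blast

lemma L_exists: assumes Z: "Z \<in> Kvecs (+) (*\<^sub>R) P k" obtains a where "a \<in> P" "(Z, a) \<in> L"
proof -
  obtain y where "y \<in> P" "\<And>u. u \<in> P \<Longrightarrow> contr_kvec k Om Z (\<lambda>_. u) = y \<bullet> u"
    using riesz_sub[OF P, of "\<lambda>w. contr_kvec k Om Z (\<lambda>_. w)"] contr_lin[OF Z] by metis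
  then show ?thesis using that[of y] Z unfolding Lv_def by auto
qed

lemma S_subspace: "subspace S"
  unfolding subspace_def
proof (intro conjI ballI allI)
  show "0 \<in> S" unfolding Sv_def Lv_def
    using Kvecs_zero by (auto intro!: exI[of _ "\<lambda>g. 0"] simp: contr_kvec_def)
next
  fix x y assume "x \<in> S" "y \<in> S"
  then obtain Zx Zy where "(Zx, x) \<in> L" "(Zy, y) \<in> L" unfolding Sv_def by auto
  then show "x + y \<in> S" unfolding Sv_def Lv_def
    by (auto intro!: exI[of _ "\<lambda>g. 1 * Zx g + Zy g"] Kvecs_lin simp: contr_kvec_def inner_add_left)
next
  fix c x assume "x \<in> S"
  then obtain Zx where "(Zx, x) \<in> L" unfolding Sv_def by auto
  then show "c *\<^sub>R x \<in> S" unfolding Sv_def Lv_def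
    by (auto intro!: exI[of _ "\<lambda>g. c * Zx g + 0"] Kvecs_lin Kvecs_zero simp: contr_kvec_def)
qed

lemma perp_L: "(\<And>w. w \<in> P \<Longrightarrow> a \<bullet> w = 0) \<Longrightarrow> ((\<lambda>g. 0), a) \<in> L"
  unfolding Lv_def using Kvecs_zero by (auto simp: contr_kvec_def)

lemma perp_S: "(\<And>w. w \<in> P \<Longrightarrow> a \<bullet> w = 0) \<Longrightarrow> a \<in> S"
  using perp_L unfolding Sv_def by blast

definition Zof :: "'v \<Rightarrow> ((nat \<Rightarrow> 'v) \<Rightarrow> real) \<Rightarrow> real" where "Zof a = (SOME Z. (Z, a) \<in> L)"

lemma Zof: "a \<in> S \<Longrightarrow> (Zof a, a) \<in> L"
proof -
  assume "a \<in> S"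
  then obtain Z where "(Z, a) \<in> L" unfolding Sv_def by auto
  then show ?thesis unfolding Zof_def using someI[of "\<lambda>Z. (Z, a) \<in> L" Z] by blast
qed

lemma wedge_L:
  assumes Zs: "\<And>i. i < k \<Longrightarrow> (Zs i, \<xi> i) \<in> L"
  shows "wedge_cov k (\<lambda>i. contr_kvec k Om (Zs i)) = DwP k P \<xi>"
proof
  fix u
  show "wedge_cov k (\<lambda>i. contr_kvec k Om (Zs i)) u = DwP k P \<xi> u"
  proof (cases "inU P k u")
    case True
    show ?thesis unfolding DwP_def Dw_def wedge_cov_def using True
    proof (simp, intro sum.cong refl arg_cong[where f="\<lambda>x. _ * x"] prod.cong)
      fix \<sigma> i assume s: "\<sigma> \<in> {\<sigma>. \<sigma> permutes {..<k}}" and i: "i \<in> {..<k}"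
      have "\<sigma> permutes {..<k}" "i < k" using s i by auto
      then have "\<sigma> i < k" by (meson lessThan_iff permutes_in_image)
      then show "contr_kvec k Om (Zs i) (\<lambda>_. u (\<sigma> i)) = \<xi> i \<bullet> u (\<sigma> i)"
        using LLD(2)[OF Zs] True i by auto
    qed
  next
    case False
    then obtain j where j: "j < k" "u j \<notin> P" by auto
    have "wedge_cov k (\<lambda>i. contr_kvec k Om (Zs i)) u = 0"
      using j by (intro wedge_zero_col[of j]) (auto intro!: contr_kvec_out[OF Om P] LLD(1)[OF Zs])
    then show ?thesis using False unfolding DwP_def by auto
  qed
qed

lemma H_S:
  assumes \<xi>: "inU S k \<xi>"
  obtains v where "v \<in> P" "DwP k P \<xi> = contr_vec Om v"
proof -
  have "\<exists>v\<in>P. wedge_cov k (\<lambda>i. contr_kvec k Om (Zof (\<xi> i))) = contr_vec Om v"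
    using \<xi> by (intro H LLD(1)[OF Zof]) auto
  then show ?thesis using wedge_L[of "\<lambda>i. Zof (\<xi> i)" \<xi>] Zof \<xi> that by auto
qed

lemma Z_contr_vec:
  assumes Za: "(Z, a) \<in> L" and v: "v \<in> P"
  shows "Z (contr_vec Om v) = (-1) ^ k * (a \<bullet> v)"
proof -
  have "Z (contr_vec Om v) = Z (\<lambda>x. (-1) ^ k * Om (x(k := v)))"
    unfolding contr_vec_eq[OF Om P v] ..
  also have "\<dots> = (-1) ^ k * Z (\<lambda>x. Om (x(k := v)))"
    by (rule kv_scale[OF LLD(1)[OF Za] contr_form[OF Om P v]])
  also have "Z (\<lambda>x. Om (x(k := v))) = a \<bullet> v" using LLD(2)[OF Za v] unfolding contr_kvec_def .
  finally show ?thesis .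
qed

lemma restrict_formula:
  assumes Za: "(Z, a) \<in> L" and \<xi>: "inU S k \<xi>" and v: "v \<in> P" and D: "DwP k P \<xi> = contr_vec Om v"
  shows "restrict_v k P S Z \<xi> = (-1) ^ k * (a \<bullet> v)"
  unfolding restrict_v_def using \<xi> D Z_contr_vec[OF Za v] by simp

lemma orth_lemma:
  assumes \<xi>: "inU S k \<xi>" and v: "v \<in> P" and D: "DwP k P \<xi> = contr_vec Om v" and i: "i < k"
  shows "\<xi> i \<bullet> v = 0"
proof (cases "\<forall>u. inU P k u \<longrightarrow> Dw k \<xi> u = 0")
  case True
  then have "DwP k P \<xi> = (\<lambda>_. 0)" unfolding DwP_def by auto
  then have "contr_vec Om v = (\<lambda>_. 0)" using D by simp
  then have "(-1) ^ k * (\<xi> i \<bullet> v) = Zof (\<xi> i) (\<lambda>_. 0)"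
    using Z_contr_vec[OF Zof v, of "\<xi> i"] \<xi> i by simp
  also have "\<dots> = 0" using kv_zero[OF LLD(1)[OF Zof]] \<xi> i by auto
  finally show ?thesis by simp
next
  case False
  then obtain u where u: "inU P k u" "Dw k \<xi> u \<noteq> 0" by auto
  have "Dw k \<xi> (u(l := v)) = 0" if l: "l < k" for l
  proof -
    have ul: "inU P k (u(l := v))" using u v by (auto simp: fun_upd_def)
    have "Dw k \<xi> (u(l := v)) = DwP k P \<xi> (u(l := v))" unfolding DwP_def using ul by simp
    also have "\<dots> = Om (shiftins 0 v (u(l := v)))" unfolding D contr_vec_shiftins ..
    also have "\<dots> = 0"
      using l ul v by (intro form_alt[OF Om P, of _ 0 "Suc l"]) (auto simp: shiftins_def)
    finally show ?thesis .
  qed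
  then show ?thesis using Dw_cramer[OF u(2) _ i] by blast
qed

definition Pi0 :: "(nat \<Rightarrow> 'v) \<Rightarrow> real" where
  "Pi0 = (\<lambda>x. if inU S (Suc k) x then restrict_v k P S (Zof (x 0)) (\<lambda>i. x (Suc i)) else 0)"

lemma Pi0_formula:
  assumes x: "inU S (Suc k) x" and v: "v \<in> P" and D: "DwP k P (\<lambda>i. x (Suc i)) = contr_vec Om v"
  shows "Pi0 x = (-1) ^ k * (x 0 \<bullet> v)"
proof -
  have "x 0 \<in> S" "inU S k (\<lambda>i. x (Suc i))" using x by auto
  then show ?thesis unfolding Pi0_def using x restrict_formula[OF Zof[of "x 0"] _ v D] by simp
qed

end

(* ---- part G ---- *)
lemma restrict_cong: "(\<And>i. i < k \<Longrightarrow> t i = t' i) \<Longrightarrow> restrict_v k P S Z t = restrict_v k P S Z t'"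
  unfolding restrict_v_def using DwP_cong_row[of k t t' P] by auto

context dirac begin

lemma tail_upd0: "(\<lambda>i. (x(0 := z)) (Suc i)) = (\<lambda>i. x (Suc i))" by auto
lemma tail_updS: "(\<lambda>i. (x(Suc j := z)) (Suc i)) = (\<lambda>i. x (Suc i))(j := z)" by (auto simp: fun_eq_iff)

lemma DwP_row_lin: "i < k \<Longrightarrow>
  DwP k P (t(i := c *\<^sub>R a + b)) = (\<lambda>u. c * DwP k P (t(i := a)) u + DwP k P (t(i := b)) u)"
  unfolding DwP_def using Dw_row_lin by (auto simp: fun_eq_iff)

lemma Pi0_form: "Pi0 \<in> Forms (+) (*\<^sub>R) S (Suc k)"
  unfolding Forms_def altform_def
proof (intro CollectI conjI allI impI)
  fix x y :: "nat \<Rightarrow> 'v" assume h: "\<forall>i<Suc k. x i = y i"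
  then have "inU S (Suc k) x = inU S (Suc k) y" by auto
  moreover have "x 0 = y 0" using h by auto
  moreover have "restrict_v k P S Z (\<lambda>i. x (Suc i)) = restrict_v k P S Z (\<lambda>i. y (Suc i))" for Z
    using h by (intro restrict_cong) auto
  ultimately show "Pi0 x = Pi0 y" unfolding Pi0_def by (simp only:)
next
  fix x :: "nat \<Rightarrow> 'v" assume n: "\<not> inU S (Suc k) x"
  show "Pi0 x = 0" unfolding Pi0_def by (rule if_not_P[OF n])
next
  fix x :: "nat \<Rightarrow> 'v" and i a b c
  assume h: "inU S (Suc k) x \<and> i < Suc k \<and> a \<in> S \<and> b \<in> S"
  then have x: "inU S (Suc k) x" and i: "i < Suc k" and a: "a \<in> S" and b: "b \<in> S" by auto
  have cab: "c *\<^sub>R a + b \<in> S" using a b S_subspace by (simp add: subspace_add subspace_scale)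
  have xz: "inU S (Suc k) (x(i := z))" if "z \<in> S" for z using x that by (auto simp: fun_upd_def)
  show "Pi0 (x(i := c *\<^sub>R a + b)) = c * Pi0 (x(i := a)) + Pi0 (x(i := b))"
  proof (cases i)
    case 0
    have t: "inU S k (\<lambda>i. x (Suc i))" using x by auto
    obtain v where v: "v \<in> P" "DwP k P (\<lambda>i. x (Suc i)) = contr_vec Om v" using H_S[OF t] by metis
    have f: "Pi0 (x(0 := z)) = (-1) ^ k * (z \<bullet> v)" if "z \<in> S" for z
      using Pi0_formula[OF xz[OF that, unfolded 0] v(1)] v(2) tail_upd0[of x z] by (simp add: fun_upd_def)
    show ?thesis unfolding 0 using f[OF cab] f[OF a] f[OF b] by (simp add: inner_add_left algebra_simps)
  next
    case (Suc j)
    then have j: "j < k" using i by simp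
    let ?t = "\<lambda>i. x (Suc i)"
    have t: "inU S k ?t" using x by auto
    have x0: "x 0 \<in> S" using x by auto
    have f: "Pi0 (x(Suc j := z)) = Zof (x 0) (DwP k P (?t(j := z)))" if "z \<in> S" for z
    proof -
      have "inU S k (?t(j := z))" using t that by (auto simp: fun_upd_def)
      then show ?thesis unfolding Pi0_def restrict_v_def using xz[OF that] Suc tail_updS[of x j z] by simp
    qed
    have Z: "Zof (x 0) \<in> Kvecs (+) (*\<^sub>R) P k" using LLD(1)[OF Zof[OF x0]] .
    show ?thesis unfolding Suc f[OF cab] f[OF a] f[OF b] DwP_row_lin[OF j]
      by (rule kv_lin[OF Z DwP_form[OF P] DwP_form[OF P]])
  qed
next
  fix x :: "nat \<Rightarrow> 'v" and i j
  assume h: "inU S (Suc k) x \<and> i < Suc k \<and> j < Suc k \<and> i \<noteq> j \<and> x i = x j"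
  then have x: "inU S (Suc k) x" by auto
  let ?t = "\<lambda>i. x (Suc i)"
  have t: "inU S k ?t" using x by auto
  show "Pi0 x = 0"
  proof (cases "i = 0 \<or> j = 0")
    case True
    then obtain m where m: "m < k" "x (Suc m) = x 0" using h
      by (metis less_Suc_eq_0_disj)
    obtain v where v: "v \<in> P" "DwP k P ?t = contr_vec Om v" using H_S[OF t] by metis
    have "Pi0 x = (-1) ^ k * (x 0 \<bullet> v)" using Pi0_formula[OF x v] .
    also have "x 0 \<bullet> v = 0" using orth_lemma[OF t v(1) v(2) m(1)] m(2) by simp
    finally show ?thesis by simp
  next
    case False
    then obtain i' j' where ij: "i = Suc i'" "j = Suc j'" by (metis not0_implies_Suc)
    then have "DwP k P ?t = (\<lambda>_. 0)" unfolding DwP_def using h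
      by (auto simp: fun_eq_iff intro!: Dw_row_ident[of i' k j'])
    moreover have x0: "x 0 \<in> S" using x by auto
    ultimately show ?thesis unfolding Pi0_def restrict_v_def
      using kv_zero[OF LLD(1)[OF Zof[OF x0]]] t x by simp
  qed
qed

lemma Pi0_pairs:
  assumes Za: "(Z, a) \<in> L"
  shows "contr_vec Pi0 a = restrict_v k P S Z"
proof
  fix \<xi>
  have a: "a \<in> S" using Za unfolding Sv_def by auto
  show "contr_vec Pi0 a \<xi> = restrict_v k P S Z \<xi>"
  proof (cases "inU S k \<xi>")
    case True
    obtain v where v: "v \<in> P" "DwP k P \<xi> = contr_vec Om v" using H_S[OF True] by metis
    have x: "inU S (Suc k) (shiftins 0 a \<xi>)" using inU_shiftins[OF a True] .
    have t: "(\<lambda>i. shiftins 0 a \<xi> (Suc i)) = \<xi>" by (auto simp: shiftins_def)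
    have "contr_vec Pi0 a \<xi> = (-1) ^ k * (a \<bullet> v)"
      unfolding contr_vec_shiftins using Pi0_formula[OF x v(1)] v(2) t by (simp add: shiftins_def)
    also have "\<dots> = restrict_v k P S Z \<xi>" using restrict_formula[OF Za True v] by simp
    finally show ?thesis .
  next
    case False
    have n1: "\<not> inU S (Suc k) (shiftins 0 a \<xi>)" by (rule not_inU_shiftins[OF False])
    have "contr_vec Pi0 a \<xi> = 0" unfolding contr_vec_shiftins Pi0_def by (rule if_not_P[OF n1])
    moreover have "restrict_v k P S Z \<xi> = 0" unfolding restrict_v_def by (rule if_not_P[OF False])
    ultimately show ?thesis by simp
  qed
qed

lemma isPi_Pi0: "isPi_v k P Om Pi0"
  unfolding isPi_v_def using Pi0_form Pi0_pairs by auto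

lemma isPi_unique: "isPi_v k P Om Pv \<Longrightarrow> Pv = Pi0"
proof -
  assume h: "isPi_v k P Om Pv"
  show ?thesis
  proof (rule forms_unique[OF S_subspace])
    show "Pv \<in> Forms (+) (*\<^sub>R) S (Suc k)" using h unfolding isPi_v_def by simp
    show "Pi0 \<in> Forms (+) (*\<^sub>R) S (Suc k)" using Pi0_form .
    fix a assume "a \<in> S"
    then have "(Zof a, a) \<in> L" by (rule Zof)
    then show "contr_vec Pv a = contr_vec Pi0 a" using h Pi0_pairs unfolding isPi_v_def by auto
  qed
qed

lemma ex1_Pi: "\<exists>!Pv. isPi_v k P Om Pv"
  using isPi_Pi0 isPi_unique by blast

lemma THE_Pi: "(THE Pv. isPi_v k P Om Pv) = Pi0"
  using isPi_Pi0 isPi_unique by blast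

lemma Pi0_perp:
  assumes \<zeta>: "\<And>w. w \<in> P \<Longrightarrow> \<zeta> \<bullet> w = 0"
  shows "(\<lambda>x. Pi0 (x(k := \<zeta>))) = (\<lambda>x. 0)"
proof -
  have z: "\<zeta> \<in> S" using perp_S[OF \<zeta>] .
  have "contr_vec Pi0 \<zeta> = restrict_v k P S (\<lambda>g. 0)" using Pi0_pairs[OF perp_L[OF \<zeta>]] .
  also have "\<dots> = (\<lambda>_. 0)" unfolding restrict_v_def by auto
  finally have "(\<lambda>x. (-1) ^ k * Pi0 (x(k := \<zeta>))) = (\<lambda>_. 0)"
    using contr_vec_eq[OF Pi0_form S_subspace z] by simp
  then show ?thesis by (auto simp: fun_eq_iff)
qed

lemma contr_Pi0_perp:
  assumes W: "W \<in> Kvecs (+) (*\<^sub>R) S k" and \<zeta>: "\<And>w. w \<in> P \<Longrightarrow> \<zeta> \<bullet> w = 0"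
  shows "contr_kvec k Pi0 W (\<lambda>_. \<zeta>) = 0"
  unfolding contr_kvec_def using Pi0_perp[OF \<zeta>] kv_zero[OF W] by simp

lemma dual_dirac: "linear_dirac (Suc k) S Pi0"
  unfolding linear_dirac_def
proof (simp only: diff_Suc_1, intro conjI allI impI)
  show "subspace S" by (rule S_subspace)
  show "Pi0 \<in> Forms (+) (*\<^sub>R) S (Suc k)" by (rule Pi0_form)
  fix Ws assume Ws: "\<forall>i<k. Ws i \<in> Kvecs (+) (*\<^sub>R) S k"
  have "\<exists>y. i < k \<longrightarrow> y \<in> P \<and> (\<forall>\<zeta>\<in>S. contr_kvec k Pi0 (Ws i) (\<lambda>_. \<zeta>) = y \<bullet> \<zeta>)" for i
  proof (cases "i < k")
    case True
    have W: "Ws i \<in> Kvecs (+) (*\<^sub>R) S k" using Ws True by auto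
    obtain y where y: "y \<in> S" "\<And>\<zeta>. \<zeta> \<in> S \<Longrightarrow> contr_kvec k Pi0 (Ws i) (\<lambda>_. \<zeta>) = y \<bullet> \<zeta>"
      using riesz_sub[OF S_subspace, of "\<lambda>\<zeta>. contr_kvec k Pi0 (Ws i) (\<lambda>_. \<zeta>)"]
        contr_kvec_lin[OF Pi0_form S_subspace _ _ W] by metis
    have "y \<in> P"
    proof (rule perp_perp[OF P])
      fix \<zeta> assume z: "\<And>w. w \<in> P \<Longrightarrow> \<zeta> \<bullet> w = 0"
      show "y \<bullet> \<zeta> = 0" using y(2)[OF perp_S[OF z]] contr_Pi0_perp[OF W z] by simp
    qed
    then show ?thesis using y by auto
  qed simp
  then obtain y where y: "\<And>i. i < k \<Longrightarrow> y i \<in> P"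
    "\<And>i \<zeta>. i < k \<Longrightarrow> \<zeta> \<in> S \<Longrightarrow> contr_kvec k Pi0 (Ws i) (\<lambda>_. \<zeta>) = y i \<bullet> \<zeta>"
    by metis
  obtain a where a: "a \<in> P" "((\<lambda>g. g y), a) \<in> L" using L_exists[OF Kvecs_ev] by metis
  have aS: "a \<in> S" using a unfolding Sv_def by auto
  have "wedge_cov k (\<lambda>i. contr_kvec k Pi0 (Ws i)) = contr_vec Pi0 a"
  proof
    fix \<xi>
    show "wedge_cov k (\<lambda>i. contr_kvec k Pi0 (Ws i)) \<xi> = contr_vec Pi0 a \<xi>"
    proof (cases "inU S k \<xi>")
      case True
      have "contr_vec Pi0 a \<xi> = Dw k \<xi> y"
        unfolding Pi0_pairs[OF a(2)] restrict_v_def DwP_def using True y(1) by simp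
      also have "\<dots> = Dw k y \<xi>" by (rule Dw_transpose)
      also have "\<dots> = wedge_cov k (\<lambda>i. contr_kvec k Pi0 (Ws i)) \<xi>"
        unfolding Dw_def wedge_cov_def
      proof (intro sum.cong refl arg_cong[where f="\<lambda>x. _ * x"] prod.cong)
        fix \<sigma> i assume s: "\<sigma> \<in> {\<sigma>. \<sigma> permutes {..<k}}" and i: "i \<in> {..<k}"
        have "\<sigma> permutes {..<k}" "i < k" using s i by auto
        then have "\<sigma> i < k" by (meson lessThan_iff permutes_in_image)
        then show "y i \<bullet> \<xi> (\<sigma> i) = contr_kvec k Pi0 (Ws i) (\<lambda>_. \<xi> (\<sigma> i))"
          using y(2) True i by auto
      qed
      finally show ?thesis by simp
    next
      case False
      then obtain j where j: "j < k" "\<xi> j \<notin> S" by auto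
      have "wedge_cov k (\<lambda>i. contr_kvec k Pi0 (Ws i)) \<xi> = 0"
        using j Ws by (intro wedge_zero_col[of j]) (auto intro!: contr_kvec_out[OF Pi0_form S_subspace])
      moreover have "contr_vec Pi0 a \<xi> = 0"
        unfolding Pi0_pairs[OF a(2)] restrict_v_def by (rule if_not_P[OF False])
      ultimately show ?thesis by simp
    qed
  qed
  then show "\<exists>v\<in>S. wedge_cov k (\<lambda>i. contr_kvec k Pi0 (Ws i)) = contr_vec Pi0 v" using aS by blast
qed

end

(* ---- part H ---- *)
context dirac begin

lemma dualS_sub: "Sv k S Pi0 \<subseteq> P"
proof
  interpret D: dirac k S Pi0 using k dual_dirac by unfold_locales
  fix b assume "b \<in> Sv k S Pi0"
  then obtain W where Wb: "(W, b) \<in> Lv k S Pi0" unfolding Sv_def by auto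
  show "b \<in> P"
  proof (rule perp_perp[OF P])
    fix \<zeta> assume z: "\<And>w. w \<in> P \<Longrightarrow> \<zeta> \<bullet> w = 0"
    have "b \<bullet> \<zeta> = contr_kvec k Pi0 W (\<lambda>_. \<zeta>)" using D.LLD(2)[OF Wb perp_S[OF z]] by simp
    also have "\<dots> = 0" using contr_Pi0_perp[OF D.LLD(1)[OF Wb] z] .
    finally show "b \<bullet> \<zeta> = 0" .
  qed
qed

lemma P_sub_dualS:
  assumes b: "b \<in> P"
  shows "b \<in> Sv k S Pi0"
proof -
  have Q: "subspace (S \<inter> P)" using S_subspace P by (rule subspace_inter)
  obtain B where B: "B \<subseteq> S \<inter> P" "pairwise real_inner_class.orthogonal B" "\<And>x. x \<in> B \<Longrightarrow> norm x = 1"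
    "independent B" "span B = S \<inter> P"
    using orthonormal_basis_subspace[OF Q] by metis
  have fB: "finite B" using B(4) independent_imp_finite by blast
  have BP: "B \<subseteq> P" using B(1) by auto
  define g where "g = contr_vec Om b"
  have g: "g \<in> Forms (+) (*\<^sub>R) P k" unfolding g_def by (rule contr_vec_form[OF Om P b])
  have null: "g (x(i := \<kappa>)) = 0"
    if \<kappa>: "\<kappa> \<in> P" and perp: "\<And>q. q \<in> span B \<Longrightarrow> \<kappa> \<bullet> q = 0" and x: "inU P k x" and i: "i < k"
    for \<kappa> x i
  proof -
    have n: "Om (z(k := \<kappa>)) = 0" if z: "inU P k z" for z
    proof -
      obtain a where a: "a \<in> P" "((\<lambda>h. h z), a) \<in> L" using L_exists[OF Kvecs_ev] by metis
      have "a \<in> span B" using a B(5) unfolding Sv_def by auto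
      then have "\<kappa> \<bullet> a = 0" using perp by simp
      moreover have "Om (z(k := \<kappa>)) = a \<bullet> \<kappa>"
        using LLD(2)[OF a(2) \<kappa>] unfolding contr_kvec_def by simp
      ultimately show ?thesis by (simp add: inner_commute)
    qed
    have "g (x(i := \<kappa>)) = Om (shiftins 0 b (x(i := \<kappa>)))" unfolding g_def contr_vec_shiftins ..
    also have "shiftins 0 b (x(i := \<kappa>)) = (shiftins 0 b x)(Suc i := \<kappa>)"
      by (auto simp: shiftins_def fun_eq_iff)
    also have "Om \<dots> = 0"
      using i by (intro null_slot[OF Om P \<kappa> n inU_shiftins[OF b x]]) auto
    finally show ?thesis .
  qed
  define W where "W = (\<lambda>h. \<Sum>J\<in>PiE {..<k} (\<lambda>_. B). (g J / fact k) * h J)"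
  have W: "W \<in> Kvecs (+) (*\<^sub>R) S k" unfolding W_def
    by (rule Kvecs_comb) (simp add: fB finite_PiE)
  have "contr_kvec k Pi0 W (\<lambda>_. \<zeta>) = b \<bullet> \<zeta>" if \<zeta>: "\<zeta> \<in> S" for \<zeta>
  proof -
    let ?PJ = "PiE {..<k} (\<lambda>_. B)"
    have ZZ: "Zof \<zeta> \<in> Kvecs (+) (*\<^sub>R) P k" using LLD(1)[OF Zof[OF \<zeta>]] .
    have e1: "Pi0 (J(k := \<zeta>)) = (-1) ^ k * Zof \<zeta> (DwP k P J)" if J: "J \<in> ?PJ" for J
    proof -
      have JS: "inU S k J" using J B(1) by (auto simp: PiE_def Pi_def)
      have "contr_vec Pi0 \<zeta> J = (-1) ^ k * Pi0 (J(k := \<zeta>))"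
        using contr_vec_eq[OF Pi0_form S_subspace \<zeta>] by simp
      moreover have "contr_vec Pi0 \<zeta> J = Zof \<zeta> (DwP k P J)"
        unfolding Pi0_pairs[OF Zof[OF \<zeta>]] restrict_v_def using JS by simp
      ultimately have "Zof \<zeta> (DwP k P J) = (-1) ^ k * Pi0 (J(k := \<zeta>))" by simp
      then have "(-1) ^ k * Zof \<zeta> (DwP k P J) = ((-1) ^ k * (-1) ^ k) * Pi0 (J(k := \<zeta>))" by simp
      also have "((-1::real) ^ k * (-1) ^ k) = 1" by (simp add: power_mult_distrib[symmetric])
      finally show ?thesis by (simp add: fun_upd_def)
    qed
    have e2: "(\<lambda>u. \<Sum>J\<in>?PJ. g J * DwP k P J u) = (\<lambda>u. fact k * g u)"
    proof
      fix u
      show "(\<Sum>J\<in>?PJ. g J * DwP k P J u) = fact k * g u"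
      proof (cases "inU P k u")
        case True
        have "DwP k P J u = Dw k J u" for J unfolding DwP_def by (rule if_P[OF True])
        moreover have "(\<Sum>J\<in>?PJ. g J * Dw k J u) = fact k * g u"
          by (rule antisym_expand[OF g P fB BP B(2)], rule B(3), assumption, rule null, assumption+, rule True)
        ultimately show ?thesis by simp
      next
        case False
        have "DwP k P J u = 0" for J unfolding DwP_def by (rule if_not_P[OF False])
        then show ?thesis using form_out[OF g P False] by simp
      qed
    qed
    have "contr_kvec k Pi0 W (\<lambda>_. \<zeta>) = (\<Sum>J\<in>?PJ. (g J / fact k) * Pi0 (J(k := \<zeta>)))"
      unfolding contr_kvec_def W_def by simp
    also have "\<dots> = (\<Sum>J\<in>?PJ. ((-1) ^ k / fact k) * (g J * Zof \<zeta> (DwP k P J)))"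
      by (intro sum.cong refl, subst e1, assumption) (simp add: field_simps)
    also have "\<dots> = ((-1) ^ k / fact k) * (\<Sum>J\<in>?PJ. g J * Zof \<zeta> (DwP k P J))"
      by (simp add: sum_distrib_left)
    also have "(\<Sum>J\<in>?PJ. g J * Zof \<zeta> (DwP k P J)) = Zof \<zeta> (\<lambda>u. \<Sum>J\<in>?PJ. g J * DwP k P J u)"
      by (rule kv_sum[OF ZZ, symmetric]) (auto simp: fB finite_PiE intro: DwP_form[OF P])
    also have "\<dots> = Zof \<zeta> (\<lambda>u. fact k * g u)" unfolding e2 ..
    also have "\<dots> = fact k * Zof \<zeta> g" by (rule kv_scale[OF ZZ g])
    also have "Zof \<zeta> g = (-1) ^ k * (\<zeta> \<bullet> b)" unfolding g_def by (rule Z_contr_vec[OF Zof[OF \<zeta>] b])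
    finally have "contr_kvec k Pi0 W (\<lambda>_. \<zeta>) = ((-1) ^ k * (-1) ^ k) * (\<zeta> \<bullet> b)" by simp
    also have "((-1::real) ^ k * (-1) ^ k) = 1" by (simp add: power_mult_distrib[symmetric])
    finally show ?thesis by (simp add: inner_commute)
  qed
  then have "(W, b) \<in> Lv k S Pi0" using W by (simp add: Lv_def)
  then show ?thesis unfolding Sv_def by blast
qed

lemma dualS: "Sv k S Pi0 = P" using dualS_sub P_sub_dualS by blast

lemma dual_isPi: "isPi_v k S Pi0 Om"
  unfolding isPi_v_def dualS
proof (intro conjI Om ballI)
  interpret D: dirac k S Pi0 using k dual_dirac by unfold_locales
  fix Wb assume "Wb \<in> Lv k S Pi0"
  then obtain W b where Wb: "(W, b) \<in> Lv k S Pi0" and Wb': "Wb = (W, b)" by (cases Wb) auto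
  have b: "b \<in> P" using Wb dualS unfolding Sv_def by auto
  have "contr_vec Om b = restrict_v k S P W"
  proof
    fix u
    show "contr_vec Om b u = restrict_v k S P W u"
    proof (cases "inU P k u")
      case True
      obtain \<zeta> where z: "\<zeta> \<in> P" "((\<lambda>h. h u), \<zeta>) \<in> L" using L_exists[OF Kvecs_ev] by metis
      have zS: "\<zeta> \<in> S" using z unfolding Sv_def by auto
      have hD: "DwP k S u = contr_vec Pi0 \<zeta>"
        unfolding Pi0_pairs[OF z(2)] restrict_v_def DwP_def using True Dw_transpose[of k u]
        by (auto simp: fun_eq_iff)
      have "restrict_v k S P W u = W (DwP k S u)" unfolding restrict_v_def using True by simp
      also have "\<dots> = (-1) ^ k * (b \<bullet> \<zeta>)" unfolding hD by (rule D.Z_contr_vec[OF Wb zS])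
      also have "b \<bullet> \<zeta> = Om (u(k := b))"
        using LLD(2)[OF z(2) b] unfolding contr_kvec_def by (simp add: inner_commute)
      finally show ?thesis using contr_vec_eq[OF Om P b] by simp
    next
      case False
      have "restrict_v k S P W u = 0" unfolding restrict_v_def by (rule if_not_P[OF False])
      moreover have "contr_vec Om b u = 0"
        unfolding contr_vec_shiftins using form_out[OF Om P not_inU_shiftins[OF False]] by simp
      ultimately show ?thesis by simp
    qed
  qed
  then show "case Wb of (Z, a) \<Rightarrow> contr_vec Om a = restrict_v k S P Z" unfolding Wb' by simp
qed

theorem involution:
  "linear_dirac (Suc k) S Pi0" "Sv k S Pi0 = P" "(THE Pv. isPi_v k S Pi0 Pv) = Om"
proof -
  interpret D: dirac k S Pi0 using k dual_dirac by unfold_locales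
  show "linear_dirac (Suc k) S Pi0" by (rule dual_dirac)
  show "Sv k S Pi0 = P" by (rule dualS)
  show "(THE Pv. isPi_v k S Pi0 Pv) = Om"
    using D.THE_Pi D.isPi_unique[OF dual_isPi] by simp
qed

end

(* ---- part I ---- *)
section \<open>Generic facts on forms with arbitrary operations\<close>

lemma gform_cong: "f \<in> Forms ad sc U n \<Longrightarrow> (\<And>i. i < n \<Longrightarrow> x i = y i) \<Longrightarrow> f x = f y"
  unfolding Forms_def altform_def by blast

lemma gform_out: "f \<in> Forms ad sc U n \<Longrightarrow> \<not> inU U n x \<Longrightarrow> f x = 0"
  unfolding Forms_def altform_def by blast

lemma gform_lin: "f \<in> Forms ad sc U n \<Longrightarrow> inU U n x \<Longrightarrow> i < n \<Longrightarrow> a \<in> U \<Longrightarrow> b \<in> U \<Longrightarrow>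
   f (x(i := ad (sc c a) b)) = c * f (x(i := a)) + f (x(i := b))"
  unfolding Forms_def altform_def by blast

lemma gform_alt: "f \<in> Forms ad sc U n \<Longrightarrow> inU U n x \<Longrightarrow> i < n \<Longrightarrow> j < n \<Longrightarrow> i \<noteq> j \<Longrightarrow> x i = x j \<Longrightarrow> f x = 0"
  unfolding Forms_def altform_def by blast

lemma gkv_lin: "Z \<in> Kvecs ad sc U n \<Longrightarrow> f \<in> Forms ad sc U n \<Longrightarrow> g \<in> Forms ad sc U n \<Longrightarrow>
   Z (\<lambda>x. c * f x + g x) = c * Z f + Z g"
  unfolding Kvecs_def by blast

lemma gkv_zero: "Z \<in> Kvecs ad sc U n \<Longrightarrow> Z (\<lambda>x. 0) = 0"
proof -
  assume Z: "Z \<in> Kvecs ad sc U n"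
  have F0: "(\<lambda>x. 0) \<in> Forms ad sc U n" unfolding Forms_def altform_def by auto
  have "Z (\<lambda>x. 2 * 0 + 0) = 2 * Z (\<lambda>x. 0) + Z (\<lambda>x. 0)" by (rule gkv_lin[OF Z F0 F0])
  then show ?thesis by simp
qed

section \<open>Identification of covectors with vectors\<close>

definition dinv :: "('v::real_inner \<Rightarrow> real) \<Rightarrow> 'v" where "dinv \<eta> = (SOME a. inner a = \<eta>)"

lemma inner_inj: "inner a = (inner b :: 'v::real_inner \<Rightarrow> real) \<Longrightarrow> a = b"
proof -
  assume "inner a = inner b"
  then have "inner a (a - b) = inner b (a - b)" by simp
  then have "(a - b) \<bullet> (a - b) = 0" by (simp add: inner_diff_left)
  then show "a = b" by simp
qed

lemma dinv_inner[simp]: "dinv (inner a) = a"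
  unfolding dinv_def by (rule some_equality) (auto dest: inner_inj)

lemma inner_dinv: "\<eta> \<in> range inner \<Longrightarrow> inner (dinv \<eta>) = \<eta>"
  by auto

lemma linear_inner: "linear (inner a)"
  using bounded_linear_inner_right[of a] bounded_linear.linear by blast

lemma linear_range:
  fixes \<eta> :: "'v::euclidean_space \<Rightarrow> real"
  assumes l: "linear \<eta>"
  shows "\<eta> \<in> range inner"
proof -
  have "\<eta> = inner (\<Sum>b\<in>Basis. \<eta> b *\<^sub>R b)"
  proof
    fix x :: 'v
    have "\<eta> x = \<eta> (\<Sum>b\<in>Basis. (x \<bullet> b) *\<^sub>R b)" by (simp add: euclidean_representation)
    also have "\<dots> = (\<Sum>b\<in>Basis. (x \<bullet> b) * \<eta> b)"
      using l by (simp add: linear_sum linear_scale)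
    also have "\<dots> = (\<Sum>b\<in>Basis. \<eta> b *\<^sub>R b) \<bullet> x"
      by (simp add: inner_sum_right inner_commute mult.commute)
    finally show "\<eta> x = inner (\<Sum>b\<in>Basis. \<eta> b *\<^sub>R b) x" by simp
  qed
  then show ?thesis by blast
qed

lemma inner_lin: "cadd (csc c (inner a)) (inner b) = inner (c *\<^sub>R a + b)"
  unfolding cadd_def csc_def by (auto simp: fun_eq_iff inner_add_left)

definition tr :: "((nat \<Rightarrow> ('v \<Rightarrow> real)) \<Rightarrow> real) \<Rightarrow> (nat \<Rightarrow> 'v::real_inner) \<Rightarrow> real" where
  "tr f = (\<lambda>x. f (\<lambda>i. inner (x i)))"

definition untr :: "nat \<Rightarrow> ((nat \<Rightarrow> 'v) \<Rightarrow> real) \<Rightarrow> (nat \<Rightarrow> ('v::real_inner \<Rightarrow> real)) \<Rightarrow> real" where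
  "untr n g = (\<lambda>\<xi>. if inU (range inner) n \<xi> then g (\<lambda>i. dinv (\<xi> i)) else 0)"

lemma inner_image_iff: "inner a \<in> inner ` S \<longleftrightarrow> a \<in> S"
  using inner_inj by blast

lemma comp_upd: "(\<lambda>i. inner ((x(j := y)) i)) = (\<lambda>i. inner (x i))(j := inner y)"
  by (auto simp: fun_eq_iff)

lemma TF1:
  assumes f: "f \<in> Forms cadd csc (inner ` S') n"
  shows "tr f \<in> Forms (+) (*\<^sub>R) S' n"
  unfolding Forms_def altform_def tr_def
proof (intro CollectI conjI allI impI)
  fix x y :: "nat \<Rightarrow> 'a" assume "\<forall>i<n. x i = y i"
  then show "f (\<lambda>i. inner (x i)) = f (\<lambda>i. inner (y i))" by (intro gform_cong[OF f]) auto
next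
  fix x :: "nat \<Rightarrow> 'a" assume "\<not> inU S' n x"
  then have "\<not> inU (inner ` S') n (\<lambda>i. inner (x i))" using inner_image_iff by metis
  then show "f (\<lambda>i. inner (x i)) = 0" by (rule gform_out[OF f])
next
  fix x :: "nat \<Rightarrow> 'a" and i a b c
  assume h: "inU S' n x \<and> i < n \<and> a \<in> S' \<and> b \<in> S'"
  have "f ((\<lambda>i. inner (x i))(i := cadd (csc c (inner a)) (inner b))) =
      c * f ((\<lambda>i. inner (x i))(i := inner a)) + f ((\<lambda>i. inner (x i))(i := inner b))"
    using h by (intro gform_lin[OF f]) auto
  then show "f (\<lambda>j. inner ((x(i := c *\<^sub>R a + b)) j)) =
      c * f (\<lambda>j. inner ((x(i := a)) j)) + f (\<lambda>j. inner ((x(i := b)) j))"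
    unfolding comp_upd inner_lin .
next
  fix x :: "nat \<Rightarrow> 'a" and i j
  assume h: "inU S' n x \<and> i < n \<and> j < n \<and> i \<noteq> j \<and> x i = x j"
  then show "f (\<lambda>i. inner (x i)) = 0"
    by (intro gform_alt[OF f, of _ i j]) auto
qed

lemma untr_upd:
  assumes "inU (range inner) n \<xi>" "i < n" "z \<in> range inner"
  shows "untr n g (\<xi>(i := z)) = g ((\<lambda>j. dinv (\<xi> j))(i := dinv z))"
  unfolding untr_def using assms by (auto simp: fun_upd_def intro!: arg_cong[where f=g])

lemma TF2:
  assumes g: "g \<in> Forms (+) (*\<^sub>R) S' n"
  shows "untr n g \<in> Forms cadd csc (inner ` S') n"
  unfolding Forms_def altform_def
proof (intro CollectI conjI allI impI)
  fix x y :: "nat \<Rightarrow> 'a \<Rightarrow> real" assume h: "\<forall>i<n. x i = y i"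
  then have "inU (range inner) n x = inU (range inner) n y" by auto
  moreover have "g (\<lambda>i. dinv (x i)) = g (\<lambda>i. dinv (y i))" using h by (intro gform_cong[OF g]) auto
  ultimately show "untr n g x = untr n g y" unfolding untr_def by (simp only:)
next
  fix x :: "nat \<Rightarrow> 'a \<Rightarrow> real" assume h: "\<not> inU (inner ` S') n x"
  show "untr n g x = 0"
  proof (cases "inU (range inner) n x")
    case True
    then have "\<not> inU S' n (\<lambda>i. dinv (x i))" using h by (metis image_eqI inner_dinv)
    then show ?thesis unfolding untr_def using gform_out[OF g] by simp
  next
    case False
    then show ?thesis unfolding untr_def by (rule if_not_P)
  qed
next
  fix x :: "nat \<Rightarrow> 'a \<Rightarrow> real" and i a b c
  assume h: "inU (inner ` S') n x \<and> i < n \<and> a \<in> inner ` S' \<and> b \<in> inner ` S'"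
  then obtain a' b' where ab: "a = inner a'" "b = inner b'" "a' \<in> S'" "b' \<in> S'" by auto
  have x: "inU (range inner) n x" using h by auto
  have xd: "inU S' n (\<lambda>j. dinv (x j))" using h by auto
  have "g ((\<lambda>j. dinv (x j))(i := c *\<^sub>R a' + b')) = c * g ((\<lambda>j. dinv (x j))(i := a')) + g ((\<lambda>j. dinv (x j))(i := b'))"
    using xd h ab by (intro gform_lin[OF g]) auto
  then show "untr n g (x(i := cadd (csc c a) b)) = c * untr n g (x(i := a)) + untr n g (x(i := b))"
    unfolding ab inner_lin using untr_upd[OF x] h by simp
next
  fix x :: "nat \<Rightarrow> 'a \<Rightarrow> real" and i j
  assume h: "inU (inner ` S') n x \<and> i < n \<and> j < n \<and> i \<noteq> j \<and> x i = x j"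
  then have "inU (range inner) n x" "inU S' n (\<lambda>j. dinv (x j))" by auto
  moreover have "g (\<lambda>j. dinv (x j)) = 0" using h \<open>inU S' n (\<lambda>j. dinv (x j))\<close>
    by (intro gform_alt[OF g, of _ i j]) auto
  ultimately show "untr n g x = 0" unfolding untr_def by simp
qed

lemma TF3:
  assumes f: "f \<in> Forms cadd csc (inner ` S') n"
  shows "untr n (tr f) = f"
proof
  fix \<xi>
  show "untr n (tr f) \<xi> = f \<xi>"
  proof (cases "inU (range inner) n \<xi>")
    case True
    then show ?thesis unfolding untr_def tr_def by (auto intro!: gform_cong[OF f])
  next
    case False
    then have "\<not> inU (inner ` S') n \<xi>" by auto
    then show ?thesis unfolding untr_def using False gform_out[OF f] by auto
  qed
qed

lemma TF4: "tr (untr n g) = g"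
  unfolding tr_def untr_def by auto

lemma untr_lin: "untr n (\<lambda>x. c * g x + h x) = (\<lambda>\<xi>. c * untr n g \<xi> + untr n h \<xi>)"
  unfolding untr_def by (auto simp: fun_eq_iff)

lemma TK1:
  assumes Z: "Z \<in> Kvecs cadd csc (inner ` S') n"
  shows "(\<lambda>g. Z (untr n g)) \<in> Kvecs (+) (*\<^sub>R) S' n"
  unfolding Kvecs_def
proof (intro CollectI ballI allI)
  fix f g c assume "f \<in> Forms (+) (*\<^sub>R) S' n" "g \<in> Forms (+) (*\<^sub>R) S' n"
  then show "Z (untr n (\<lambda>x. c * f x + g x)) = c * Z (untr n f) + Z (untr n g)"
    unfolding untr_lin by (intro gkv_lin[OF Z] TF2)
qed

lemma TK2:
  assumes W: "W \<in> Kvecs (+) (*\<^sub>R) S' n"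
  shows "(\<lambda>f. W (tr f)) \<in> Kvecs cadd csc (inner ` S') n"
  unfolding Kvecs_def
proof (intro CollectI ballI allI)
  fix f g c assume "f \<in> Forms cadd csc (inner ` S') n" "g \<in> Forms cadd csc (inner ` S') n"
  moreover have "tr (\<lambda>x. c * f x + g x) = (\<lambda>x. c * tr f x + tr g x)" unfolding tr_def ..
  ultimately show "W (tr (\<lambda>x. c * f x + g x)) = c * W (tr f) + W (tr g)"
    by (simp only:) (intro gkv_lin[OF W] TF1)
qed

lemma ID2: "contr_vec (tr Pv) a x = contr_vec Pv (inner a) (\<lambda>i. inner (x i))"
  unfolding contr_vec_def tr_def by (auto intro!: arg_cong[where f=Pv])

(* ---- part J ---- *)
lemma dual_sub_a:
  fixes S :: "('v::euclidean_space \<Rightarrow> real) set"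
  assumes S: "dual_subspace S"
  shows "S = inner ` (inner -` S)" "subspace (inner -` S)"
proof -
  have "S \<subseteq> range inner" using S linear_range unfolding dual_subspace_def by blast
  then show "S = inner ` (inner -` S)" by auto
  have lin: "cadd (csc c f) g \<in> S" if "f \<in> S" "g \<in> S" for c f g using S that unfolding dual_subspace_def by blast
  have "inner (0::'v) = (\<lambda>_. 0)" by (simp add: fun_eq_iff)
  then have z: "inner (0::'v) \<in> S" using S unfolding dual_subspace_def by simp
  show "subspace (inner -` S)" unfolding subspace_def
  proof (intro conjI ballI allI)
    show "(0::'v) \<in> inner -` S" using z by simp
    fix x y :: 'v assume "x \<in> inner -` S" "y \<in> inner -` S"
    then show "x + y \<in> inner -` S" using lin[of "inner x" "inner y" 1] inner_lin[of 1 x y] by simp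
  next
    fix c and x :: 'v assume "x \<in> inner -` S"
    then show "c *\<^sub>R x \<in> inner -` S" using lin[OF _ z, of "inner x" c] inner_lin[of c x 0] by simp
  qed
qed

lemma dual_sub_b:
  fixes S' :: "'v::euclidean_space set"
  assumes S': "subspace S'"
  shows "dual_subspace (inner ` S')"
  unfolding dual_subspace_def
proof (intro conjI ballI allI)
  show "inner ` S' \<subseteq> {f. linear f}" using linear_inner by auto
  have "(\<lambda>_. 0) = inner (0::'v)" by (simp add: fun_eq_iff)
  then show "(\<lambda>_. 0) \<in> inner ` S'" using S' by (simp add: subspace_0)
  fix f g c assume "f \<in> inner ` S'" "g \<in> inner ` S'"
  then obtain a b where ab: "f = inner a" "g = inner b" "a \<in> S'" "b \<in> S'" by auto
  then have "c *\<^sub>R a + b \<in> S'" using S' by (simp add: subspace_add subspace_scale)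
  then show "cadd (csc c f) g \<in> inner ` S'" unfolding ab inner_lin by (rule imageI)
qed

lemma condH_to_LD:
  fixes S' :: "'v::euclidean_space set"
  assumes H: "condH' (Suc k) S Pv" and SS: "S = inner ` S'" and S': "subspace S'"
  shows "linear_dirac (Suc k) S' (tr Pv)"
proof -
  have Pv: "Pv \<in> Forms cadd csc S (Suc k)" using H unfolding condH'_def by simp
  have H': "\<And>w. (\<forall>i<k. w i \<in> Kvecs cadd csc S k) \<Longrightarrow>
     \<exists>\<eta>\<in>S. wedge_cov k (\<lambda>i. contr_kvec k Pv (w i)) = contr_vec Pv \<eta>"
    using H unfolding condH'_def by simp
  show ?thesis unfolding linear_dirac_def
  proof (simp only: diff_Suc_1, intro conjI allI impI)
    show "subspace S'" by fact
    show "tr Pv \<in> Forms (+) (*\<^sub>R) S' (Suc k)" using TF1 Pv SS by simp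
    fix W assume W: "\<forall>i<k. W i \<in> Kvecs (+) (*\<^sub>R) S' k"
    define w where "w i = (\<lambda>f. W i (tr f))" for i
    have w: "\<forall>i<k. w i \<in> Kvecs cadd csc S k" unfolding w_def SS using W TK2 by blast
    obtain \<eta> where \<eta>: "\<eta> \<in> S" "wedge_cov k (\<lambda>i. contr_kvec k Pv (w i)) = contr_vec Pv \<eta>"
      using H'[OF w] by blast
    then obtain a where a: "a \<in> S'" "\<eta> = inner a" using SS by auto
    have c: "contr_kvec k (tr Pv) (W i) (\<lambda>_. y) = contr_kvec k Pv (w i) (\<lambda>_. inner y)" for i y
    proof -
      have "tr (\<lambda>x. Pv (x(k := inner y))) = (\<lambda>x. tr Pv (x(k := y)))"
        unfolding tr_def comp_upd ..
      then show ?thesis unfolding contr_kvec_def w_def by simp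
    qed
    have "wedge_cov k (\<lambda>i. contr_kvec k (tr Pv) (W i)) = contr_vec (tr Pv) a"
    proof
      fix x
      have "wedge_cov k (\<lambda>i. contr_kvec k (tr Pv) (W i)) x = wedge_cov k (\<lambda>i. contr_kvec k Pv (w i)) (\<lambda>i. inner (x i))"
        unfolding wedge_cov_def c ..
      also have "\<dots> = contr_vec Pv \<eta> (\<lambda>i. inner (x i))" using \<eta>(2) by simp
      also have "\<dots> = contr_vec (tr Pv) a x" unfolding ID2 a(2) ..
      finally show "wedge_cov k (\<lambda>i. contr_kvec k (tr Pv) (W i)) x = contr_vec (tr Pv) a x" .
    qed
    then show "\<exists>v\<in>S'. wedge_cov k (\<lambda>i. contr_kvec k (tr Pv) (W i)) = contr_vec (tr Pv) v"
      using a by blast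
  qed
qed

lemma LD_to_condH:
  fixes S' :: "'v::euclidean_space set"
  assumes LD: "linear_dirac (Suc k) S' g"
  shows "condH' (Suc k) (inner ` S') (untr (Suc k) g)"
proof -
  have S': "subspace S'" and g: "g \<in> Forms (+) (*\<^sub>R) S' (Suc k)"
    using LD unfolding linear_dirac_def by auto
  have H: "\<And>Zs. (\<forall>i<k. Zs i \<in> Kvecs (+) (*\<^sub>R) S' k) \<Longrightarrow>
     \<exists>v\<in>S'. wedge_cov k (\<lambda>i. contr_kvec k g (Zs i)) = contr_vec g v"
    using LD unfolding linear_dirac_def by simp
  let ?Pv = "untr (Suc k) g"
  have Pv: "?Pv \<in> Forms cadd csc (inner ` S') (Suc k)" by (rule TF2[OF g])
  show ?thesis unfolding condH'_def
  proof (simp only: diff_Suc_1, intro conjI allI impI)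
    show "dual_subspace (inner ` S')" by (rule dual_sub_b[OF S'])
    show "?Pv \<in> Forms cadd csc (inner ` S') (Suc k)" by (rule Pv)
    fix w assume w: "\<forall>i<k. w i \<in> Kvecs cadd csc (inner ` S') k"
    define W where "W i = (\<lambda>h. w i (untr k h))" for i
    have W: "\<forall>i<k. W i \<in> Kvecs (+) (*\<^sub>R) S' k" unfolding W_def using w TK1 by blast
    obtain a where a: "a \<in> S'" "wedge_cov k (\<lambda>i. contr_kvec k g (W i)) = contr_vec g a"
      using H[OF W] by blast
    have key: "contr_kvec k g (W i) (\<lambda>_. y) = contr_kvec k ?Pv (w i) (\<lambda>_. inner y)" for i y
    proof -
      have "untr k (\<lambda>x. g (x(k := y))) = (\<lambda>\<xi>. ?Pv (\<xi>(k := inner y)))"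
      proof
        fix \<xi> :: "nat \<Rightarrow> 'v \<Rightarrow> real"
        show "untr k (\<lambda>x. g (x(k := y))) \<xi> = ?Pv (\<xi>(k := inner y))"
        proof (cases "inU (range inner) k \<xi>")
          case True
          then have r: "inU (range inner) (Suc k) (\<xi>(k := inner y))" by (auto simp: fun_upd_def)
          have e3: "(\<lambda>i. dinv ((\<xi>(k := inner y)) i)) = (\<lambda>i. dinv (\<xi> i))(k := y)" by (auto simp: fun_eq_iff)
          have e1: "untr k (\<lambda>x. g (x(k := y))) \<xi> = g ((\<lambda>i. dinv (\<xi> i))(k := y))"
            unfolding untr_def by (rule if_P[OF True])
          have e2: "?Pv (\<xi>(k := inner y)) = g (\<lambda>i. dinv ((\<xi>(k := inner y)) i))"
            unfolding untr_def by (rule if_P[OF r])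
          show ?thesis unfolding e1 e2 e3 ..
        next
          case False
          then have r: "\<not> inU (range inner) (Suc k) (\<xi>(k := inner y))" by (auto simp: fun_upd_def)
          have e1: "untr k (\<lambda>x. g (x(k := y))) \<xi> = 0" unfolding untr_def by (rule if_not_P[OF False])
          have e2: "?Pv (\<xi>(k := inner y)) = 0" unfolding untr_def by (rule if_not_P[OF r])
          show ?thesis unfolding e1 e2 ..
        qed
      qed
      then show ?thesis unfolding contr_kvec_def W_def by simp
    qed
    have "wedge_cov k (\<lambda>i. contr_kvec k ?Pv (w i)) = contr_vec ?Pv (inner a)"
    proof
      fix \<xi> :: "nat \<Rightarrow> 'v \<Rightarrow> real"
      show "wedge_cov k (\<lambda>i. contr_kvec k ?Pv (w i)) \<xi> = contr_vec ?Pv (inner a) \<xi>"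
      proof (cases "inU (range inner) k \<xi>")
        case True
        define x where "x i = dinv (\<xi> i)" for i
        have ix: "inner (x i) = \<xi> i" if "i < k" for i unfolding x_def using True that by auto
        have "wedge_cov k (\<lambda>i. contr_kvec k ?Pv (w i)) \<xi> = wedge_cov k (\<lambda>i. contr_kvec k g (W i)) x"
          unfolding wedge_cov_def key
        proof (intro sum.cong refl arg_cong[where f="\<lambda>x. _ * x"] prod.cong)
          fix \<sigma> i assume s: "\<sigma> \<in> {\<sigma>. \<sigma> permutes {..<k}}" and i: "i \<in> {..<k}"
          have "\<sigma> permutes {..<k}" "i < k" using s i by auto
          then have "\<sigma> i < k" by (meson lessThan_iff permutes_in_image)
          then show "contr_kvec k ?Pv (w i) (\<lambda>_. \<xi> (\<sigma> i)) = contr_kvec k ?Pv (w i) (\<lambda>_. inner (x (\<sigma> i)))"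
            using ix by simp
        qed
        also have "\<dots> = contr_vec g a x" using a(2) by simp
        also have "\<dots> = contr_vec (tr ?Pv) a x" unfolding TF4 ..
        also have "\<dots> = contr_vec ?Pv (inner a) (\<lambda>i. inner (x i))" by (rule ID2)
        also have "\<dots> = contr_vec ?Pv (inner a) \<xi>"
          unfolding contr_vec_def by (intro gform_cong[OF Pv]) (auto simp: ix)
        finally show ?thesis .
      next
        case False
        then obtain j where j: "j < k" "\<xi> j \<notin> range inner" by auto
        have z: "(\<lambda>\<xi>'. ?Pv (\<xi>'(k := \<xi> j))) = (\<lambda>_. 0)"
        proof
          fix \<xi>' :: "nat \<Rightarrow> 'v \<Rightarrow> real"
          have "\<not> inU (range inner) (Suc k) (\<xi>'(k := \<xi> j))" using j by (auto intro!: exI[of _ k])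
          then show "?Pv (\<xi>'(k := \<xi> j)) = 0" unfolding untr_def by (rule if_not_P)
        qed
        have "wedge_cov k (\<lambda>i. contr_kvec k ?Pv (w i)) \<xi> = 0"
        proof (rule wedge_zero_col[OF j(1)])
          fix i assume "i < k"
          then have "w i \<in> Kvecs cadd csc (inner ` S') k" using w by simp
          then show "contr_kvec k ?Pv (w i) (\<lambda>_. \<xi> j) = 0"
            unfolding contr_kvec_def z by (rule gkv_zero)
        qed
        moreover have "contr_vec ?Pv (inner a) \<xi> = 0"
        proof -
          have "\<not> inU (range inner) (Suc k) (\<lambda>i. if i = 0 then inner a else \<xi> (i - 1))"
            using j by (auto intro!: exI[of _ "Suc j"])
          then show ?thesis unfolding contr_vec_def untr_def by (rule if_not_P)
        qed
        ultimately show ?thesis by simp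
      qed
    qed
    then show "\<exists>\<eta>\<in>inner ` S'. wedge_cov k (\<lambda>i. contr_kvec k ?Pv (w i)) = contr_vec ?Pv \<eta>"
      using a(1) by blast
  qed
qed

lemma wedge_cong_row: "(\<And>i. i < k \<Longrightarrow> F i = G i) \<Longrightarrow> wedge_cov k F = wedge_cov k G"
  unfolding wedge_cov_def by (auto intro!: ext sum.cong prod.cong)

lemma restrict_kvec_cong: "(\<And>i. i < k \<Longrightarrow> \<xi> i = \<xi>' i) \<Longrightarrow> restrict_kvec k P S Z \<xi> = restrict_kvec k P S Z \<xi>'"
proof -
  assume h: "\<And>i. i < k \<Longrightarrow> \<xi> i = \<xi>' i"
  then have "wedge_cov k (\<lambda>i y. \<xi> i (y 0)) = wedge_cov k (\<lambda>i y. \<xi>' i (y 0))" by (intro wedge_cong_row) auto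
  moreover have "inU S k \<xi> = inU S k \<xi>'" using h by auto
  ultimately show ?thesis unfolding restrict_kvec_def by (simp only:)
qed

context dirac begin

lemma Lperp_iff: "(Z, \<eta>) \<in> Lperp (Suc k) P Om \<longleftrightarrow> (\<exists>a. \<eta> = inner a \<and> (Z, a) \<in> L)"
proof
  assume h: "(Z, \<eta>) \<in> Lperp (Suc k) P Om"
  then have "linear \<eta>" unfolding Lperp_def by simp
  then obtain a where a: "\<eta> = inner a" using linear_range by blast
  then show "\<exists>a. \<eta> = inner a \<and> (Z, a) \<in> L" using h unfolding Lperp_def Lv_def by auto
next
  assume "\<exists>a. \<eta> = inner a \<and> (Z, a) \<in> L"
  then show "(Z, \<eta>) \<in> Lperp (Suc k) P Om" unfolding Lperp_def Lv_def using linear_inner by auto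
qed

lemma S_of_eq: "S_of (Suc k) P Om = inner ` S"
  unfolding S_of_def Sv_def using Lperp_iff by auto

lemma ID4: "restrict_kvec k P (inner ` S) Z (\<lambda>i. inner (x i)) = restrict_v k P S Z x"
  unfolding restrict_kvec_def restrict_v_def DwP_def Dw_def by (simp add: inner_image_iff)

lemma isPi_orig: "is_Pi_of (Suc k) P Om Pv \<longleftrightarrow> Pv = untr (Suc k) Pi0"
proof
  assume h: "is_Pi_of (Suc k) P Om Pv"
  have Pv: "Pv \<in> Forms cadd csc (inner ` S) (Suc k)" using h unfolding is_Pi_of_def S_of_eq by simp
  have pairs: "\<And>Z \<eta>. (Z, \<eta>) \<in> Lperp (Suc k) P Om \<Longrightarrow> contr_vec Pv \<eta> = restrict_kvec k P (inner ` S) Z"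
    using h unfolding is_Pi_of_def S_of_eq by auto
  have "isPi_v k P Om (tr Pv)" unfolding isPi_v_def
  proof (intro conjI TF1[OF Pv] ballI)
    fix Za assume "Za \<in> L"
    then obtain Z a where Za: "(Z, a) \<in> L" "Za = (Z, a)" by (cases Za) auto
    have "(Z, inner a) \<in> Lperp (Suc k) P Om" using Lperp_iff Za by auto
    then have e: "contr_vec Pv (inner a) = restrict_kvec k P (inner ` S) Z" by (rule pairs)
    have "contr_vec (tr Pv) a = restrict_v k P S Z"
    proof
      fix x show "contr_vec (tr Pv) a x = restrict_v k P S Z x" unfolding ID2 e ID4 ..
    qed
    then show "case Za of (Z, a) \<Rightarrow> contr_vec (tr Pv) a = restrict_v k P S Z" using Za by simp
  qed
  then have "tr Pv = Pi0" by (rule isPi_unique)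
  then show "Pv = untr (Suc k) Pi0" using TF3[OF Pv] by simp
next
  assume h: "Pv = untr (Suc k) Pi0"
  have Pv: "Pv \<in> Forms cadd csc (inner ` S) (Suc k)" unfolding h by (rule TF2[OF Pi0_form])
  show "is_Pi_of (Suc k) P Om Pv" unfolding is_Pi_of_def S_of_eq diff_Suc_1
  proof (intro conjI Pv ballI)
    fix Z\<eta> assume "Z\<eta> \<in> Lperp (Suc k) P Om"
    then obtain Z \<eta> where Z\<eta>: "(Z, \<eta>) \<in> Lperp (Suc k) P Om" "Z\<eta> = (Z, \<eta>)" by (cases Z\<eta>) auto
    then obtain a where a: "\<eta> = inner a" "(Z, a) \<in> L" using Lperp_iff by blast
    have aS: "a \<in> S" using a unfolding Sv_def by auto
    have "contr_vec Pv \<eta> = restrict_kvec k P (inner ` S) Z"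
    proof
      fix \<xi> :: "nat \<Rightarrow> 'v \<Rightarrow> real"
      show "contr_vec Pv \<eta> \<xi> = restrict_kvec k P (inner ` S) Z \<xi>"
      proof (cases "inU (range inner) k \<xi>")
        case True
        define x where "x i = dinv (\<xi> i)" for i
        have ix: "inner (x i) = \<xi> i" if "i < k" for i unfolding x_def using True that by auto
        have "contr_vec Pv \<eta> \<xi> = contr_vec Pv (inner a) (\<lambda>i. inner (x i))"
          unfolding contr_vec_def a(1) by (intro gform_cong[OF Pv]) (auto simp: ix)
        also have "\<dots> = contr_vec (tr Pv) a x" by (rule ID2[symmetric])
        also have "tr Pv = Pi0" unfolding h TF4 ..
        also have "contr_vec Pi0 a x = restrict_v k P S Z x" unfolding Pi0_pairs[OF a(2)] ..
        also have "\<dots> = restrict_kvec k P (inner ` S) Z (\<lambda>i. inner (x i))" by (rule ID4[symmetric])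
        also have "\<dots> = restrict_kvec k P (inner ` S) Z \<xi>" by (intro restrict_kvec_cong) (simp add: ix)
        finally show ?thesis .
      next
        case False
        then have n: "\<not> inU (inner ` S) k \<xi>" by auto
        have "restrict_kvec k P (inner ` S) Z \<xi> = 0" unfolding restrict_kvec_def by (rule if_not_P[OF n])
        moreover have "contr_vec Pv \<eta> \<xi> = 0"
        proof -
          obtain j where j: "j < k" "\<xi> j \<notin> inner ` S" using n by auto
          have "(\<lambda>i. if i = 0 then \<eta> else \<xi> (i - 1)) (Suc j) \<notin> inner ` S" using j by simp
          then have "\<not> inU (inner ` S) (Suc k) (\<lambda>i. if i = 0 then \<eta> else \<xi> (i - 1))"
            using j(1) Suc_less_eq by blast
          then show ?thesis unfolding contr_vec_def by (rule gform_out[OF Pv])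
        qed
        ultimately show ?thesis by simp
      qed
    qed
    then show "case Z\<eta> of (Z, \<eta>) \<Rightarrow> contr_vec Pv \<eta> = restrict_kvec k P (inner ` S) Z" using Z\<eta> by simp
  qed
qed

lemma ex1_orig: "\<exists>!Pv. is_Pi_of (Suc k) P Om Pv"
  by (rule ex1I[of _ "untr (Suc k) Pi0"]) (auto simp: isPi_orig)

lemma dtp: "dirac_to_pair (Suc k) (P, Om) = (inner ` S, untr (Suc k) Pi0)"
proof -
  have "(THE Pv. is_Pi_of (Suc k) P Om Pv) = untr (Suc k) Pi0"
    by (rule the_equality) (auto simp: isPi_orig)
  then show ?thesis unfolding dirac_to_pair_def by (simp add: S_of_eq)
qed

end

(* ---- part K ---- *)
definition Fv :: "nat \<Rightarrow> 'v::real_inner set \<times> ((nat \<Rightarrow> 'v) \<Rightarrow> real) \<Rightarrow> 'v set \<times> ((nat \<Rightarrow> 'v) \<Rightarrow> real)" where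
  "Fv k = (\<lambda>(P, Om). (Sv k P Om, THE Pv. isPi_v k P Om Pv))"

context dirac begin

lemma Fv1: "Fv k (P, Om) = (S, Pi0)"
  unfolding Fv_def using THE_Pi by simp

lemma Fv2: "Fv k (S, Pi0) = (P, Om)"
  unfolding Fv_def using involution by simp

end

lemma vimage_image_inner: "inner -` (inner ` (A :: 'v::real_inner set)) = A"
  using inner_inj by blast

theorem proposition4p5:
  fixes p :: nat
  assumes "2 \<le> p" and "p \<le> DIM('v::euclidean_space)"
  shows "(\<forall>P (Om :: (nat \<Rightarrow> 'v) \<Rightarrow> real). linear_dirac p P Om \<longrightarrow> (\<exists>!Pv. is_Pi_of p P Om Pv))
    \<and> bij_betw (dirac_to_pair p)
        {(P, Om :: (nat \<Rightarrow> 'v) \<Rightarrow> real). linear_dirac p P Om}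
        {(S, Pv). condH' p S Pv}"
proof -
  define k where "k = p - 1"
  have p: "p = Suc k" and k: "0 < k" using assms(1) unfolding k_def by auto
  have part1: "\<forall>P (Om :: (nat \<Rightarrow> 'v) \<Rightarrow> real). linear_dirac p P Om \<longrightarrow> (\<exists>!Pv. is_Pi_of p P Om Pv)"
  proof (intro allI impI)
    fix P and Om :: "(nat \<Rightarrow> 'v) \<Rightarrow> real"
    assume "linear_dirac p P Om"
    then interpret dirac k P Om using k unfolding p by unfold_locales
    show "\<exists>!Pv. is_Pi_of p P Om Pv" unfolding p by (rule ex1_orig)
  qed
  define G :: "('v \<Rightarrow> real) set \<times> ((nat \<Rightarrow> ('v \<Rightarrow> real)) \<Rightarrow> real) \<Rightarrow> 'v set \<times> ((nat \<Rightarrow> 'v) \<Rightarrow> real)"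
    where "G = (\<lambda>(S, Pv). Fv k (inner -` S, tr Pv))"
  have "bij_betw (dirac_to_pair p) {(P, Om :: (nat \<Rightarrow> 'v) \<Rightarrow> real). linear_dirac p P Om} {(S, Pv). condH' p S Pv}"
  proof (rule bij_betw_byWitness[where f'=G])
    show "\<forall>a\<in>{(P, Om :: (nat \<Rightarrow> 'v) \<Rightarrow> real). linear_dirac p P Om}. G (dirac_to_pair p a) = a"
    proof
      fix a assume "a \<in> {(P, Om :: (nat \<Rightarrow> 'v) \<Rightarrow> real). linear_dirac p P Om}"
      then obtain P Om where a: "a = (P, Om)" "linear_dirac (Suc k) P Om" unfolding p by auto
      interpret dirac k P Om using k a(2) by unfold_locales
      show "G (dirac_to_pair p a) = a"
        unfolding a(1) p dtp G_def by (simp add: vimage_image_inner TF4 Fv2)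
    qed
    show "\<forall>b\<in>{(S, Pv). condH' p S Pv}. dirac_to_pair p (G b) = b"
    proof
      fix b :: "('v \<Rightarrow> real) set \<times> ((nat \<Rightarrow> ('v \<Rightarrow> real)) \<Rightarrow> real)"
      assume "b \<in> {(S, Pv). condH' p S Pv}"
      then obtain S Pv where b: "b = (S, Pv)" "condH' (Suc k) S Pv" unfolding p by auto
      have ds: "dual_subspace S" using b(2) unfolding condH'_def by simp
      have Pv: "Pv \<in> Forms cadd csc S (Suc k)" using b(2) unfolding condH'_def by simp
      note SS = dual_sub_a[OF ds]
      have LD1: "linear_dirac (Suc k) (inner -` S) (tr Pv)" by (rule condH_to_LD[OF b(2) SS(1) SS(2)])
      interpret A: dirac k "inner -` S" "tr Pv" using k LD1 by unfold_locales
      interpret B: dirac k "A.S" "A.Pi0" using k A.dual_dirac by unfold_locales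
      have "G b = (A.S, A.Pi0)" unfolding b(1) G_def using A.Fv1 by simp
      then have "dirac_to_pair p (G b) = (inner ` B.S, untr (Suc k) B.Pi0)" unfolding p using B.dtp by simp
      also have "B.S = inner -` S" using A.involution(2) .
      also have "B.Pi0 = tr Pv" using B.THE_Pi A.involution(3) by simp
      also have "(inner ` (inner -` S), untr (Suc k) (tr Pv)) = (S, Pv)"
      proof -
        have Pv': "Pv \<in> Forms cadd csc (inner ` (inner -` S)) (Suc k)" using Pv by (simp only: SS(1)[symmetric])
        show ?thesis using TF3[OF Pv'] SS(1)[symmetric] by simp
      qed
      finally show "dirac_to_pair p (G b) = b" unfolding b(1) .
    qed
    show "dirac_to_pair p ` {(P, Om :: (nat \<Rightarrow> 'v) \<Rightarrow> real). linear_dirac p P Om} \<subseteq> {(S, Pv). condH' p S Pv}"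
    proof
      fix c :: "('v \<Rightarrow> real) set \<times> ((nat \<Rightarrow> ('v \<Rightarrow> real)) \<Rightarrow> real)"
      assume "c \<in> dirac_to_pair p ` {(P, Om :: (nat \<Rightarrow> 'v) \<Rightarrow> real). linear_dirac p P Om}"
      then obtain P Om where c: "c = dirac_to_pair (Suc k) (P, Om)" "linear_dirac (Suc k) P Om"
        unfolding p by auto
      interpret dirac k P Om using k c(2) by unfold_locales
      have "condH' (Suc k) (inner ` S) (untr (Suc k) Pi0)" by (rule LD_to_condH[OF dual_dirac])
      then show "c \<in> {(S, Pv). condH' p S Pv}" unfolding c(1) dtp p by simp
    qed
    show "G ` {(S, Pv). condH' p S Pv} \<subseteq> {(P, Om :: (nat \<Rightarrow> 'v) \<Rightarrow> real). linear_dirac p P Om}"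
    proof
      fix c assume "c \<in> G ` {(S, Pv :: (nat \<Rightarrow> ('v \<Rightarrow> real)) \<Rightarrow> real). condH' p S Pv}"
      then obtain S Pv where c: "c = G (S, Pv)" "condH' (Suc k) S Pv" unfolding p by auto
      have ds: "dual_subspace S" using c(2) unfolding condH'_def by simp
      note SS = dual_sub_a[OF ds]
      have LD1: "linear_dirac (Suc k) (inner -` S) (tr Pv)" by (rule condH_to_LD[OF c(2) SS(1) SS(2)])
      interpret A: dirac k "inner -` S" "tr Pv" using k LD1 by unfold_locales
      have "c = (A.S, A.Pi0)" unfolding c(1) G_def using A.Fv1 by simp
      then show "c \<in> {(P, Om :: (nat \<Rightarrow> 'v) \<Rightarrow> real). linear_dirac p P Om}"
        using A.dual_dirac unfolding p by simp
    qed
  qed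
  then show ?thesis using part1 by blast
qed

end
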